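(* The subdivision construction is functorial: for every functor $f:C\to D$ between small categories, $Sd(f):Sd(C)\to Sd(D)$ as described below is a well-defined functor (independent of the choices of representatives and right inverses), $Sd(\mathrm{id}_C)=\mathrm{id}_{Sd(C)}$, and $Sd(g\circ f)=Sd(g)\circ Sd(f)$ for all functors $f:C\to D$, $g:D\to E$.
   Context: For a small category $C$: a $q$-simplex of the nerve $NC$ is a functor $X:[q]\to C$ ($[q]=\{0<\dots<q\}$), i.e. a chain of arrows $f_i:X_{i-1}\to X_i$, $1\le i\le q$; $q_X=q$. It is non-degenerate if no $f_i$ is an identity. $\Delta/C$ has all simplices as objects and as morphisms $X\to Y$ the order-preserving $\xi:[q_X]\to[q_Y]$ with $Y\circ\xi=X$, written $\xi_*$. For a $q$-simplex $X$ and surjective order-preserving $s:[q+1]\to[q]$ with order-preserving right inverses $d,d'$, the morphisms $d_*,d'_*:X\to X\circ s$ are elementary equivalent; $\sim$ is the smallest equivalence relation on morphisms of $\Delta/C$ compatible with composition containing these pairs; $[\Delta/C]$ is the quotient category with morphisms the classes $[\xi_*]$; $Sd(C)$ is its full subcategory on the non-degenerate simplices. For a simplex $X=(f_1,\dots,f_q)$, let $r(X)$ be the non-degenerate simplex obtained by deleting all identity arrows among the $f_i$, of dimension $p_X$ = number of non-identity $f_i$, and let $\alpha_X:[q_X]\to[p_X]$ be the surjective order-preserving map with $\alpha_X(i-1)=\alpha_X(i)$ iff $f_i$ is an identity, so $X=r(X)\circ\alpha_X$. For a functor $f:C\to D$, $Sd(f)$ sends an object $X$ of $Sd(C)$ to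 $r(f\circ X)$, and a morphism $[\xi_*]:X\to Y$ to $[(\alpha_{f\circ Y}\circ\xi\circ\sigma)_*]:r(f\circ X)\to r(f\circ Y)$, where $\sigma$ is an order-preserving right inverse of $\alpha_{f\circ X}$. *)

theory Defs
  imports Main
begin

record ('o, 'a) cat =
  Obj  :: "'o set"
  Arr  :: "'a set"
  Dom  :: "'a \<Rightarrow> 'o"
  Cod  :: "'a \<Rightarrow> 'o"
  Id   :: "'o \<Rightarrow> 'a"
  Comp :: "'a \<Rightarrow> 'a \<Rightarrow> 'a"   (* Comp C g f = g o f, defined when Cod f = Dom g *)

definition is_cat :: "('o, 'a) cat \<Rightarrow> bool" where
  "is_cat C \<longleftrightarrow>
     (\<forall>f\<in>Arr C. Dom C f \<in> Obj C \<and> Cod C f \<in> Obj C) \<and>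
     (\<forall>x\<in>Obj C. Id C x \<in> Arr C \<and> Dom C (Id C x) = x \<and> Cod C (Id C x) = x) \<and>
     (\<forall>f\<in>Arr C. \<forall>g\<in>Arr C. Cod C f = Dom C g \<longrightarrow>
        Comp C g f \<in> Arr C \<and> Dom C (Comp C g f) = Dom C f \<and> Cod C (Comp C g f) = Cod C g) \<and>
     (\<forall>f\<in>Arr C. Comp C (Id C (Cod C f)) f = f \<and> Comp C f (Id C (Dom C f)) = f) \<and>
     (\<forall>f\<in>Arr C. \<forall>g\<in>Arr C. \<forall>h\<in>Arr C. Cod C f = Dom C g \<longrightarrow> Cod C g = Dom C h \<longrightarrow>
        Comp C h (Comp C g f) = Comp C (Comp C h g) f)"

record ('o1, 'a1, 'o2, 'a2) ftor =
  FO :: "'o1 \<Rightarrow> 'o2"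
  FA :: "'a1 \<Rightarrow> 'a2"

definition is_functor :: "('o1, 'a1) cat \<Rightarrow> ('o2, 'a2) cat \<Rightarrow> ('o1, 'a1, 'o2, 'a2) ftor \<Rightarrow> bool" where
  "is_functor C D F \<longleftrightarrow>
     (\<forall>x\<in>Obj C. FO F x \<in> Obj D) \<and>
     (\<forall>f\<in>Arr C. FA F f \<in> Arr D \<and> Dom D (FA F f) = FO F (Dom C f) \<and> Cod D (FA F f) = FO F (Cod C f)) \<and>
     (\<forall>x\<in>Obj C. FA F (Id C x) = Id D (FO F x)) \<and>
     (\<forall>f\<in>Arr C. \<forall>g\<in>Arr C. Cod C f = Dom C g \<longrightarrow> FA F (Comp C g f) = Comp D (FA F g) (FA F f))"

definition id_functor :: "('o, 'a, 'o, 'a) ftor" where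
  "id_functor = \<lparr>FO = id, FA = id\<rparr>"

definition functor_comp :: "('o2, 'a2, 'o3, 'a3) ftor \<Rightarrow> ('o1, 'a1, 'o2, 'a2) ftor \<Rightarrow> ('o1, 'a1, 'o3, 'a3) ftor" where
  "functor_comp G F = \<lparr>FO = FO G \<circ> FO F, FA = FA G \<circ> FA F\<rparr>"

text \<open>A q-simplex X : [q] -> C is represented by its chain (X_0, [f_1, ..., f_q]).
  Its dimension q_X is the length of the arrow list.\<close>

type_synonym ('o, 'a) simplex = "'o \<times> 'a list"

definition dim :: "('o, 'a) simplex \<Rightarrow> nat" where
  "dim X = length (snd X)"

definition vert :: "('o, 'a) cat \<Rightarrow> ('o, 'a) simplex \<Rightarrow> nat \<Rightarrow> 'o" where
  "vert C X i = (if i = 0 then fst X else Cod C (snd X ! (i - 1)))"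

definition is_simplex :: "('o, 'a) cat \<Rightarrow> ('o, 'a) simplex \<Rightarrow> bool" where
  "is_simplex C X \<longleftrightarrow> fst X \<in> Obj C \<and> set (snd X) \<subseteq> Arr C \<and>
     (\<forall>i < dim X. Dom C (snd X ! i) = vert C X i)"

text \<open>The arrow X(i \<le> j) : X_i -> X_j, i.e. f_j o ... o f_{i+1} (identity if j \<le> i).\<close>
primrec btw :: "('o, 'a) cat \<Rightarrow> ('o, 'a) simplex \<Rightarrow> nat \<Rightarrow> nat \<Rightarrow> 'a" where
  "btw C X i 0 = Id C (vert C X i)"
| "btw C X i (Suc j) = (if Suc j \<le> i then Id C (vert C X i) else Comp C (snd X ! j) (btw C X i j))"

definition is_identity :: "('o, 'a) cat \<Rightarrow> 'a \<Rightarrow> bool" where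
  "is_identity C a \<longleftrightarrow> (\<exists>x\<in>Obj C. a = Id C x)"

definition nondeg :: "('o, 'a) cat \<Rightarrow> ('o, 'a) simplex \<Rightarrow> bool" where
  "nondeg C X \<longleftrightarrow> is_simplex C X \<and> (\<forall>a\<in>set (snd X). \<not> is_identity C a)"

text \<open>Order-preserving maps [p] -> [q], represented as the list of values xi(0), ..., xi(p).\<close>
definition ord_map :: "nat list \<Rightarrow> nat \<Rightarrow> nat \<Rightarrow> bool" where
  "ord_map \<xi> p q \<longleftrightarrow> length \<xi> = Suc p \<and> sorted \<xi> \<and> (\<forall>i\<in>set \<xi>. i \<le> q)"

definition map_comp :: "nat list \<Rightarrow> nat list \<Rightarrow> nat list" where
  "map_comp \<eta> \<xi> = map (\<lambda>i. \<eta> ! i) \<xi>"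

text \<open>The composite simplex Y o xi for xi : [p] -> [q_Y].\<close>
definition simp_comp :: "('o, 'a) cat \<Rightarrow> ('o, 'a) simplex \<Rightarrow> nat list \<Rightarrow> ('o, 'a) simplex" where
  "simp_comp C Y \<xi> = (vert C Y (\<xi> ! 0), map (\<lambda>j. btw C Y (\<xi> ! (j - 1)) (\<xi> ! j)) [1..<length \<xi>])"

definition fsimp :: "('o1, 'a1, 'o2, 'a2) ftor \<Rightarrow> ('o1, 'a1) simplex \<Rightarrow> ('o2, 'a2) simplex" where
  "fsimp F X = (FO F (fst X), map (FA F) (snd X))"

type_synonym ('o, 'a) dmor = "('o, 'a) simplex \<times> ('o, 'a) simplex \<times> nat list"

definition src :: "('o, 'a) dmor \<Rightarrow> ('o, 'a) simplex" where "src m = fst m"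
definition tgt :: "('o, 'a) dmor \<Rightarrow> ('o, 'a) simplex" where "tgt m = fst (snd m)"
definition mapof :: "('o, 'a) dmor \<Rightarrow> nat list" where "mapof m = snd (snd m)"

definition is_dmor :: "('o, 'a) cat \<Rightarrow> ('o, 'a) dmor \<Rightarrow> bool" where
  "is_dmor C m \<longleftrightarrow> is_simplex C (src m) \<and> is_simplex C (tgt m) \<and>
     ord_map (mapof m) (dim (src m)) (dim (tgt m)) \<and> simp_comp C (tgt m) (mapof m) = src m"

definition dcomp :: "('o, 'a) dmor \<Rightarrow> ('o, 'a) dmor \<Rightarrow> ('o, 'a) dmor" where
  "dcomp n m = (src m, tgt n, map_comp (mapof n) (mapof m))"

definition did :: "('o, 'a) simplex \<Rightarrow> ('o, 'a) dmor" where
  "did X = (X, X, [0..<Suc (dim X)])"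

definition is_surj_deg :: "nat list \<Rightarrow> nat \<Rightarrow> bool" where
  "is_surj_deg s q \<longleftrightarrow> ord_map s (Suc q) q \<and> set s = {0..q}"

definition is_rinv :: "nat list \<Rightarrow> nat list \<Rightarrow> nat \<Rightarrow> nat \<Rightarrow> bool" where
  "is_rinv \<sigma> \<alpha> p q \<longleftrightarrow> ord_map \<sigma> p q \<and> map_comp \<alpha> \<sigma> = [0..<Suc p]"

inductive dsim :: "('o, 'a) cat \<Rightarrow> ('o, 'a) dmor \<Rightarrow> ('o, 'a) dmor \<Rightarrow> bool" for C where
  elem: "\<lbrakk> is_simplex C X; is_surj_deg s (dim X);
           is_rinv d s (dim X) (Suc (dim X)); is_rinv d' s (dim X) (Suc (dim X)) \<rbrakk>
         \<Longrightarrow> dsim C (X, simp_comp C X s, d) (X, simp_comp C X s, d')"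
| refl: "is_dmor C m \<Longrightarrow> dsim C m m"
| sym: "dsim C m m' \<Longrightarrow> dsim C m' m"
| trans: "dsim C m m' \<Longrightarrow> dsim C m' m'' \<Longrightarrow> dsim C m m''"
| post: "\<lbrakk> dsim C m m'; is_dmor C n; src n = tgt m \<rbrakk> \<Longrightarrow> dsim C (dcomp n m) (dcomp n m')"
| pre: "\<lbrakk> dsim C m m'; is_dmor C n; tgt n = src m \<rbrakk> \<Longrightarrow> dsim C (dcomp m n) (dcomp m' n)"

text \<open>Morphisms of Sd(C) are ~-classes of Delta/C morphisms between non-degenerate simplices;
  we work with representatives.\<close>
definition is_sd_mor :: "('o, 'a) cat \<Rightarrow> ('o, 'a) dmor \<Rightarrow> bool" where
  "is_sd_mor C m \<longleftrightarrow> is_dmor C m \<and> nondeg C (src m) \<and> nondeg C (tgt m)"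

definition rr :: "('o, 'a) cat \<Rightarrow> ('o, 'a) simplex \<Rightarrow> ('o, 'a) simplex" where
  "rr C X = (fst X, filter (\<lambda>a. \<not> is_identity C a) (snd X))"

definition alpha :: "('o, 'a) cat \<Rightarrow> ('o, 'a) simplex \<Rightarrow> nat list" where
  "alpha C X = map (\<lambda>i. length (filter (\<lambda>a. \<not> is_identity C a) (take i (snd X)))) [0..<Suc (dim X)]"

definition Sd_obj :: "('o2, 'a2) cat \<Rightarrow> ('o1, 'a1, 'o2, 'a2) ftor \<Rightarrow> ('o1, 'a1) simplex \<Rightarrow> ('o2, 'a2) simplex" where
  "Sd_obj D F X = rr D (fsimp F X)"

text \<open>Sd(f) on a representative m = xi_* : X -> Y, given a right inverse sigma of alpha_{f o X}:
  (alpha_{f o Y} o xi o sigma)_* : r(f o X) -> r(f o Y).\<close>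
definition Sd_mor :: "('o2, 'a2) cat \<Rightarrow> ('o1, 'a1, 'o2, 'a2) ftor \<Rightarrow> ('o1, 'a1) dmor \<Rightarrow> nat list
                       \<Rightarrow> ('o2, 'a2) dmor" where
  "Sd_mor D F m \<sigma> = (Sd_obj D F (src m), Sd_obj D F (tgt m),
                      map_comp (alpha D (fsimp F (tgt m))) (map_comp (mapof m) \<sigma>))"

definition sd_choice :: "('o2, 'a2) cat \<Rightarrow> ('o1, 'a1, 'o2, 'a2) ftor \<Rightarrow> ('o1, 'a1) simplex \<Rightarrow> nat list \<Rightarrow> bool" where
  "sd_choice D F X \<sigma> \<longleftrightarrow> is_rinv \<sigma> (alpha D (fsimp F X)) (dim (Sd_obj D F X)) (dim X)"

end

theory Submission
  imports Defs
begin


locale ccat = fixes C :: "('o, 'a) cat" assumes cat: "is_cat C"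
begin

lemma dom_cod_obj: "f \<in> Arr C \<Longrightarrow> Dom C f \<in> Obj C \<and> Cod C f \<in> Obj C"
  using cat unfolding is_cat_def by blast
lemma id_props: "x \<in> Obj C \<Longrightarrow> Id C x \<in> Arr C \<and> Dom C (Id C x) = x \<and> Cod C (Id C x) = x"
  using cat unfolding is_cat_def by blast
lemma comp_props: "f \<in> Arr C \<Longrightarrow> g \<in> Arr C \<Longrightarrow> Cod C f = Dom C g \<Longrightarrow>
   Comp C g f \<in> Arr C \<and> Dom C (Comp C g f) = Dom C f \<and> Cod C (Comp C g f) = Cod C g"
  using cat unfolding is_cat_def by blast
lemma id_left: "f \<in> Arr C \<Longrightarrow> Comp C (Id C (Cod C f)) f = f"
  using cat unfolding is_cat_def by blast
lemma id_right: "f \<in> Arr C \<Longrightarrow> Comp C f (Id C (Dom C f)) = f"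
  using cat unfolding is_cat_def by blast
lemma assoc: "f \<in> Arr C \<Longrightarrow> g \<in> Arr C \<Longrightarrow> h \<in> Arr C \<Longrightarrow> Cod C f = Dom C g \<Longrightarrow> Cod C g = Dom C h \<Longrightarrow>
        Comp C h (Comp C g f) = Comp C (Comp C h g) f"
  using cat unfolding is_cat_def by blast

lemma is_identity_D: "is_identity C a \<Longrightarrow> a \<in> Arr C \<Longrightarrow> a = Id C (Dom C a) \<and> Cod C a = Dom C a"
  unfolding is_identity_def using id_props by auto

lemma vert_0[simp]: "vert C X 0 = fst X" by (simp add: vert_def)
lemma vert_Suc[simp]: "vert C X (Suc i) = Cod C (snd X ! i)" by (simp add: vert_def)

lemma sim_arr: "is_simplex C X \<Longrightarrow> j < dim X \<Longrightarrow>
   snd X ! j \<in> Arr C \<and> Dom C (snd X ! j) = vert C X j"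
  unfolding is_simplex_def dim_def by auto

lemma vert_obj: assumes "is_simplex C X" "i \<le> dim X" shows "vert C X i \<in> Obj C"
proof (cases i)
  case 0 then show ?thesis using assms unfolding is_simplex_def by auto
next
  case (Suc j)
  then show ?thesis using assms sim_arr[of X j] dom_cod_obj by auto
qed

lemma btw_le: "j \<le> i \<Longrightarrow> btw C X i j = Id C (vert C X i)"
  by (induction j) auto

lemma btw_props: "is_simplex C X \<Longrightarrow> i \<le> j \<Longrightarrow> j \<le> dim X \<Longrightarrow>
  btw C X i j \<in> Arr C \<and> Dom C (btw C X i j) = vert C X i \<and> Cod C (btw C X i j) = vert C X j"
proof (induction j)
  case 0 then show ?case using id_props[of "fst X"] vert_obj[of X 0] by auto
next
  case (Suc j)
  show ?case
  proof (cases "Suc j \<le> i")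
    case True
    then have "i = Suc j" using Suc by auto
    then show ?thesis using Suc id_props vert_obj[of X i] by auto
  next
    case False
    then have ij: "i \<le> j" by auto
    have a: "snd X ! j \<in> Arr C" "Dom C (snd X ! j) = vert C X j" using sim_arr[of X j] Suc by auto
    have b: "btw C X i j \<in> Arr C \<and> Dom C (btw C X i j) = vert C X i \<and> Cod C (btw C X i j) = vert C X j"
      using Suc ij by auto
    show ?thesis using False comp_props[of "btw C X i j" "snd X ! j"] a b by auto
  qed
qed

lemma btw_trans: "is_simplex C X \<Longrightarrow> i \<le> j \<Longrightarrow> j \<le> k \<Longrightarrow> k \<le> dim X \<Longrightarrow>
   btw C X i k = Comp C (btw C X j k) (btw C X i j)"
proof (induction k)
  case 0 then show ?case using btw_props[of X 0 0] id_left[of "Id C (fst X)"] by auto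
next
  case (Suc k)
  show ?case
  proof (cases "j = Suc k")
    case True
    have e: "btw C X j j = Id C (vert C X j)" by (simp add: btw_le)
    have p: "btw C X i j \<in> Arr C \<and> Cod C (btw C X i j) = vert C X j" using btw_props[of X i j] Suc True by auto
    show ?thesis unfolding True[symmetric] using e p id_left[of "btw C X i j"] by metis
  next
    case False
    then have jk: "j \<le> k" using Suc by auto
    have a: "snd X ! k \<in> Arr C" "Dom C (snd X ! k) = vert C X k" using sim_arr[of X k] Suc by auto
    have b1: "btw C X i j \<in> Arr C \<and> Cod C (btw C X i j) = vert C X j" using btw_props[of X i j] Suc jk by auto
    have b2: "btw C X j k \<in> Arr C \<and> Dom C (btw C X j k) = vert C X j \<and> Cod C (btw C X j k) = vert C X k"
      using btw_props[of X j k] Suc jk by auto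
    have "btw C X i (Suc k) = Comp C (snd X ! k) (btw C X i k)" using Suc jk by auto
    also have "\<dots> = Comp C (snd X ! k) (Comp C (btw C X j k) (btw C X i j))" using Suc jk by auto
    also have "\<dots> = Comp C (Comp C (snd X ! k) (btw C X j k)) (btw C X i j)"
      using assoc a b1 b2 by auto
    also have "\<dots> = Comp C (btw C X j (Suc k)) (btw C X i j)" using jk by auto
    finally show ?thesis .
  qed
qed

lemma btw_step: "is_simplex C X \<Longrightarrow> j < dim X \<Longrightarrow> btw C X j (Suc j) = snd X ! j"
  using sim_arr[of X j] id_right[of "snd X ! j"] btw_le[of j j X] by simp

lemma sim_eqI: "is_simplex C A \<Longrightarrow> is_simplex C B \<Longrightarrow> fst A = fst B \<Longrightarrow> dim A = dim B \<Longrightarrow>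
   (\<And>j. j < dim A \<Longrightarrow> btw C A j (Suc j) = btw C B j (Suc j)) \<Longrightarrow> A = B"
  using btw_step by (metis dim_def nth_equalityI prod_eqI)

end
declare upt_Suc[simp del]

lemma om_len: "ord_map \<xi> p q \<Longrightarrow> length \<xi> = Suc p" by (simp add: ord_map_def)
lemma om_le: "ord_map \<xi> p q \<Longrightarrow> i \<le> p \<Longrightarrow> \<xi> ! i \<le> q"
  unfolding ord_map_def by (metis less_Suc_eq_le nth_mem)
lemma om_mono: "ord_map \<xi> p q \<Longrightarrow> i \<le> j \<Longrightarrow> j \<le> p \<Longrightarrow> \<xi> ! i \<le> \<xi> ! j"
  unfolding ord_map_def by (simp add: sorted_nth_mono)
lemma ord_mapI: "length \<xi> = Suc p \<Longrightarrow> (\<And>i. i \<le> p \<Longrightarrow> \<xi> ! i \<le> q) \<Longrightarrow>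
   (\<And>i j. i \<le> j \<Longrightarrow> j \<le> p \<Longrightarrow> \<xi> ! i \<le> \<xi> ! j) \<Longrightarrow> ord_map \<xi> p q"
  unfolding ord_map_def
  by (metis in_set_conv_nth less_Suc_eq_le sorted_iff_nth_mono)
lemma mc_nth: "i < length \<xi> \<Longrightarrow> map_comp \<eta> \<xi> ! i = \<eta> ! (\<xi> ! i)"
  by (simp add: map_comp_def)
lemma mc_len[simp]: "length (map_comp \<eta> \<xi>) = length \<xi>"
  by (simp add: map_comp_def)
lemma om_comp: "ord_map \<eta> p q \<Longrightarrow> ord_map \<xi> r p \<Longrightarrow> ord_map (map_comp \<eta> \<xi>) r q"
  apply (rule ord_mapI)
    apply (simp add: om_len)
   apply (simp add: mc_nth om_len om_le)
  apply (simp add: mc_nth om_len om_le om_mono)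
  done
lemma om_id: "ord_map [0..<Suc q] q q"
  by (rule ord_mapI) (auto simp del: upt_Suc)
lemma mc_assoc: "ord_map \<xi> r p \<Longrightarrow> ord_map \<eta> p q \<Longrightarrow>
   map_comp (map_comp \<theta> \<eta>) \<xi> = map_comp \<theta> (map_comp \<eta> \<xi>)"
  unfolding map_comp_def ord_map_def
  by (auto intro!: map_cong simp: less_Suc_eq_le)
lemma mc_id_left: "ord_map \<xi> r q \<Longrightarrow> map_comp [0..<Suc q] \<xi> = \<xi>"
  unfolding map_comp_def
  by (auto intro!: nth_equalityI simp: om_len om_le less_Suc_eq_le simp del: upt_Suc)
lemma mc_id_right: "length \<xi> = Suc r \<Longrightarrow> map_comp \<xi> [0..<Suc r] = \<xi>"
  unfolding map_comp_def
  by (auto intro!: nth_equalityI)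

context ccat begin

lemma sc_dim: "length \<xi> = Suc p \<Longrightarrow> dim (simp_comp C Y \<xi>) = p"
  by (simp add: simp_comp_def dim_def)
lemma sc_fst: "fst (simp_comp C Y \<xi>) = vert C Y (\<xi> ! 0)"
  by (simp add: simp_comp_def)
lemma sc_nth: "length \<xi> = Suc p \<Longrightarrow> j < p \<Longrightarrow> snd (simp_comp C Y \<xi>) ! j = btw C Y (\<xi> ! j) (\<xi> ! Suc j)"
  by (simp add: simp_comp_def)

lemma sc_vert: assumes "is_simplex C Y" "ord_map \<xi> p (dim Y)" "i \<le> p"
  shows "vert C (simp_comp C Y \<xi>) i = vert C Y (\<xi> ! i)"
proof (cases i)
  case 0 then show ?thesis by (simp add: sc_fst)
next
  case (Suc j)
  then have "snd (simp_comp C Y \<xi>) ! j = btw C Y (\<xi> ! j) (\<xi> ! Suc j)"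
    using assms sc_nth om_len by auto
  moreover have "Cod C (btw C Y (\<xi> ! j) (\<xi> ! Suc j)) = vert C Y (\<xi> ! Suc j)"
    using btw_props[of Y "\<xi> ! j" "\<xi> ! Suc j"] assms Suc om_mono[of \<xi> p _ j "Suc j"] om_le by auto
  ultimately show ?thesis using Suc by simp
qed

lemma sc_sim: assumes "is_simplex C Y" "ord_map \<xi> p (dim Y)"
  shows "is_simplex C (simp_comp C Y \<xi>)"
proof -
  have d: "dim (simp_comp C Y \<xi>) = p" using sc_dim om_len assms by blast
  have "fst (simp_comp C Y \<xi>) \<in> Obj C" using sc_fst vert_obj assms om_le by auto
  moreover have "\<forall>j<p. snd (simp_comp C Y \<xi>) ! j \<in> Arr C \<and>
       Dom C (snd (simp_comp C Y \<xi>) ! j) = vert C (simp_comp C Y \<xi>) j"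
  proof (intro allI impI)
    fix j assume j: "j < p"
    have le: "\<xi> ! j \<le> \<xi> ! Suc j" "\<xi> ! Suc j \<le> dim Y" using assms j om_mono om_le by auto
    show "snd (simp_comp C Y \<xi>) ! j \<in> Arr C \<and>
       Dom C (snd (simp_comp C Y \<xi>) ! j) = vert C (simp_comp C Y \<xi>) j"
      using sc_nth[of \<xi> p j Y] om_len[OF assms(2)] j btw_props[OF assms(1) le] sc_vert[OF assms, of j] by auto
  qed
  ultimately show ?thesis using d unfolding is_simplex_def
    by (metis dim_def in_set_conv_nth subsetI)
qed

lemma sc_btw: assumes "is_simplex C Y" "ord_map \<xi> p (dim Y)" "i \<le> p" "j \<le> p"
  shows "btw C (simp_comp C Y \<xi>) i j = btw C Y (\<xi> ! i) (\<xi> ! j)"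
  using assms(4)
proof (induction j)
  case 0
  then show ?case using btw_le[of "\<xi> ! 0" "\<xi> ! i" Y] om_mono[OF assms(2), of 0 i] assms sc_vert by simp
next
  case (Suc j)
  show ?case
  proof (cases "Suc j \<le> i")
    case True
    then show ?thesis using btw_le[of "\<xi> ! Suc j" "\<xi> ! i" Y] om_mono[OF assms(2), of "Suc j" i] assms sc_vert
      by simp
  next
    case False
    have le: "\<xi> ! i \<le> \<xi> ! j" "\<xi> ! j \<le> \<xi> ! Suc j" "\<xi> ! Suc j \<le> dim Y"
      using False Suc assms om_mono om_le by auto
    have "btw C (simp_comp C Y \<xi>) i (Suc j) = Comp C (btw C Y (\<xi> ! j) (\<xi> ! Suc j)) (btw C Y (\<xi> ! i) (\<xi> ! j))"
      using False Suc sc_nth[of \<xi> p j Y] om_len[OF assms(2)] by simp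
    also have "\<dots> = btw C Y (\<xi> ! i) (\<xi> ! Suc j)" using btw_trans[OF assms(1) le] by simp
    finally show ?thesis .
  qed
qed

lemma sc_comp: assumes "is_simplex C Y" "ord_map \<eta> p (dim Y)" "ord_map \<xi> r p"
  shows "simp_comp C (simp_comp C Y \<eta>) \<xi> = simp_comp C Y (map_comp \<eta> \<xi>)"
proof -
  have s1: "is_simplex C (simp_comp C Y \<eta>)" using sc_sim assms by auto
  have d1: "dim (simp_comp C Y \<eta>) = p" using sc_dim om_len assms by blast
  have om: "ord_map (map_comp \<eta> \<xi>) r (dim Y)" using om_comp assms by blast
  show ?thesis
  proof (rule sim_eqI)
    show "is_simplex C (simp_comp C (simp_comp C Y \<eta>) \<xi>)" using sc_sim s1 d1 assms by auto
    show "is_simplex C (simp_comp C Y (map_comp \<eta> \<xi>))" using sc_sim om assms by auto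
    show "fst (simp_comp C (simp_comp C Y \<eta>) \<xi>) = fst (simp_comp C Y (map_comp \<eta> \<xi>))"
      using sc_fst sc_vert[OF assms(1,2)] om_le[OF assms(3)] mc_nth[of 0 \<xi> \<eta>] om_len[OF assms(3)] by simp
    show "dim (simp_comp C (simp_comp C Y \<eta>) \<xi>) = dim (simp_comp C Y (map_comp \<eta> \<xi>))"
      using sc_dim om_len assms by (metis mc_len)
    fix j assume j: "j < dim (simp_comp C (simp_comp C Y \<eta>) \<xi>)"
    then have jr: "j < r" using sc_dim om_len assms by metis
    have "btw C (simp_comp C (simp_comp C Y \<eta>) \<xi>) j (Suc j) = btw C (simp_comp C Y \<eta>) (\<xi> ! j) (\<xi> ! Suc j)"
      using sc_btw[OF s1, of \<xi> r j "Suc j"] d1 assms jr by simp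
    also have "\<dots> = btw C Y (\<eta> ! (\<xi> ! j)) (\<eta> ! (\<xi> ! Suc j))"
      using sc_btw[OF assms(1,2)] om_le[OF assms(3)] jr by simp
    also have "\<dots> = btw C (simp_comp C Y (map_comp \<eta> \<xi>)) j (Suc j)"
      using sc_btw[OF assms(1) om, of j "Suc j"] jr mc_nth om_len[OF assms(3)] by simp
    finally show "btw C (simp_comp C (simp_comp C Y \<eta>) \<xi>) j (Suc j) = btw C (simp_comp C Y (map_comp \<eta> \<xi>)) j (Suc j)" .
  qed
qed

lemma sc_id: assumes "is_simplex C Y" shows "simp_comp C Y [0..<Suc (dim Y)] = Y"
proof (rule sim_eqI)
  show "is_simplex C (simp_comp C Y [0..<Suc (dim Y)])" using sc_sim om_id assms by blast
  show "is_simplex C Y" by fact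
  show "fst (simp_comp C Y [0..<Suc (dim Y)]) = fst Y" by (simp add: sc_fst del: upt_Suc)
  show "dim (simp_comp C Y [0..<Suc (dim Y)]) = dim Y" by (simp add: sc_dim del: upt_Suc)
  fix j assume "j < dim (simp_comp C Y [0..<Suc (dim Y)])"
  then have "j < dim Y" by (simp add: sc_dim del: upt_Suc)
  then show "btw C (simp_comp C Y [0..<Suc (dim Y)]) j (Suc j) = btw C Y j (Suc j)"
    using sc_btw[OF assms om_id, of j "Suc j"] by (simp del: upt_Suc)
qed

end

locale cfun = C: ccat C + D: ccat D for C :: "('o1,'a1) cat" and D :: "('o2,'a2) cat" +
  fixes F :: "('o1, 'a1, 'o2, 'a2) ftor" assumes ffun: "is_functor C D F"
begin

lemma F_obj: "x \<in> Obj C \<Longrightarrow> FO F x \<in> Obj D" using ffun unfolding is_functor_def by blast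
lemma F_arr: "f \<in> Arr C \<Longrightarrow> FA F f \<in> Arr D \<and> Dom D (FA F f) = FO F (Dom C f) \<and> Cod D (FA F f) = FO F (Cod C f)"
  using ffun unfolding is_functor_def by blast
lemma F_id: "x \<in> Obj C \<Longrightarrow> FA F (Id C x) = Id D (FO F x)" using ffun unfolding is_functor_def by blast
lemma F_comp: "f \<in> Arr C \<Longrightarrow> g \<in> Arr C \<Longrightarrow> Cod C f = Dom C g \<Longrightarrow> FA F (Comp C g f) = Comp D (FA F g) (FA F f)"
  using ffun unfolding is_functor_def by blast
lemma F_identity: "is_identity C a \<Longrightarrow> is_identity D (FA F a)"
  unfolding is_identity_def using F_id F_obj by blast

lemma fs_dim[simp]: "dim (fsimp F X) = dim X" by (simp add: fsimp_def dim_def)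
lemma fs_fst[simp]: "fst (fsimp F X) = FO F (fst X)" by (simp add: fsimp_def)
lemma fs_nth: "j < dim X \<Longrightarrow> snd (fsimp F X) ! j = FA F (snd X ! j)" by (simp add: fsimp_def dim_def)

lemma fs_vert: "is_simplex C X \<Longrightarrow> i \<le> dim X \<Longrightarrow> vert D (fsimp F X) i = FO F (vert C X i)"
  by (cases i) (auto simp: fs_nth F_arr C.sim_arr)

lemma fs_sim: assumes "is_simplex C X" shows "is_simplex D (fsimp F X)"
  unfolding is_simplex_def
proof (intro conjI allI impI)
  show "fst (fsimp F X) \<in> Obj D" using assms F_obj unfolding is_simplex_def by simp
  show "set (snd (fsimp F X)) \<subseteq> Arr D" using assms F_arr unfolding is_simplex_def fsimp_def by auto
  fix i assume "i < dim (fsimp F X)"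
  then show "Dom D (snd (fsimp F X) ! i) = vert D (fsimp F X) i"
    using assms fs_nth F_arr C.sim_arr fs_vert by auto
qed

lemma fs_btw: assumes "is_simplex C X" "i \<le> dim X" "j \<le> dim X"
  shows "btw D (fsimp F X) i j = FA F (btw C X i j)"
  using assms(3)
proof (induction j)
  case 0 then show ?case using fs_vert assms F_id C.vert_obj by simp
next
  case (Suc j)
  show ?case
  proof (cases "Suc j \<le> i")
    case True then show ?thesis using fs_vert assms F_id C.vert_obj by simp
  next
    case False
    then have ij: "i \<le> j" by simp
    have a: "snd X ! j \<in> Arr C" "Dom C (snd X ! j) = vert C X j" using C.sim_arr assms Suc by auto
    have b: "btw C X i j \<in> Arr C" "Cod C (btw C X i j) = vert C X j" using C.btw_props assms Suc ij by auto
    show ?thesis using False Suc fs_nth[of j X] F_comp[OF b(1) a(1)] a b by simp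
  qed
qed

lemma fs_sc: assumes "is_simplex C Y" "ord_map \<xi> p (dim Y)"
  shows "fsimp F (simp_comp C Y \<xi>) = simp_comp D (fsimp F Y) \<xi>"
proof (rule D.sim_eqI)
  have s: "is_simplex C (simp_comp C Y \<xi>)" using C.sc_sim assms by blast
  have d: "dim (simp_comp C Y \<xi>) = p" using C.sc_dim om_len assms by blast
  show "is_simplex D (fsimp F (simp_comp C Y \<xi>))" using fs_sim s by blast
  show "is_simplex D (simp_comp D (fsimp F Y) \<xi>)" using D.sc_sim fs_sim assms by simp
  show "fst (fsimp F (simp_comp C Y \<xi>)) = fst (simp_comp D (fsimp F Y) \<xi>)"
    using C.sc_fst D.sc_fst fs_vert assms om_le by simp
  show "dim (fsimp F (simp_comp C Y \<xi>)) = dim (simp_comp D (fsimp F Y) \<xi>)"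
    using d D.sc_dim om_len assms by simp
  fix j assume "j < dim (fsimp F (simp_comp C Y \<xi>))"
  then have j: "j < p" using d by simp
  have "btw D (fsimp F (simp_comp C Y \<xi>)) j (Suc j) = FA F (btw C Y (\<xi> ! j) (\<xi> ! Suc j))"
    using fs_btw[OF s, of j "Suc j"] d j C.sc_btw[OF assms, of j "Suc j"] by (simp del: btw.simps)
  also have "\<dots> = btw D (simp_comp D (fsimp F Y) \<xi>) j (Suc j)"
    using D.sc_btw[OF fs_sim[OF assms(1)], of \<xi> p j "Suc j"] assms j fs_btw om_le by (simp del: btw.simps)
  finally show "btw D (fsimp F (simp_comp C Y \<xi>)) j (Suc j) = btw D (simp_comp D (fsimp F Y) \<xi>) j (Suc j)" .
qed

end

lemma functor_comp_is: "is_functor C D F \<Longrightarrow> is_functor D E G \<Longrightarrow> is_functor C E (functor_comp G F)"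
  unfolding is_functor_def functor_comp_def by auto

lemma id_functor_is: "is_cat C \<Longrightarrow> is_functor C C id_functor"
  unfolding is_functor_def id_functor_def is_cat_def by auto

lemma fsimp_comp: "fsimp (functor_comp G F) X = fsimp G (fsimp F X)"
  by (simp add: fsimp_def functor_comp_def)

lemma fsimp_id: "fsimp id_functor X = X"
  by (simp add: fsimp_def id_functor_def)


lemma alpha_len[simp]: "length (alpha C V) = Suc (dim V)" by (simp add: alpha_def)
lemma alpha_nth: "i \<le> dim V \<Longrightarrow> alpha C V ! i = length (filter (\<lambda>a. \<not> is_identity C a) (take i (snd V)))"
  by (simp add: alpha_def nth_upt less_Suc_eq_le del: upt_Suc)
lemma rr_dim: "dim (rr C V) = length (filter (\<lambda>a. \<not> is_identity C a) (snd V))"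
  by (simp add: rr_def dim_def)
lemma rr_fst[simp]: "fst (rr C V) = fst V" by (simp add: rr_def)
lemma take_filter_mono: "i \<le> j \<Longrightarrow> length (filter P (take i xs)) \<le> length (filter P (take j xs))"
proof -
  assume "i \<le> j"
  then obtain k where "j = i + k" using le_Suc_ex by blast
  then show ?thesis by (simp add: take_add)
qed
lemma alpha_om: "ord_map (alpha C V) (dim V) (dim (rr C V))"
proof (rule ord_mapI)
  show "length (alpha C V) = Suc (dim V)" by simp
  fix i assume "i \<le> dim V"
  then show "alpha C V ! i \<le> dim (rr C V)" using take_filter_mono[of i "length (snd V)" "\<lambda>a. \<not> is_identity C a" "snd V"]
    by (simp add: alpha_nth rr_def dim_def)
next
  fix i j assume "i \<le> j" "j \<le> dim V"
  then show "alpha C V ! i \<le> alpha C V ! j" by (simp add: alpha_nth take_filter_mono)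
qed
lemma alpha_0[simp]: "alpha C V ! 0 = 0" by (simp add: alpha_nth)
lemma alpha_Suc: "i < dim V \<Longrightarrow>
   alpha C V ! Suc i = alpha C V ! i + (if is_identity C (snd V ! i) then 0 else 1)"
  by (simp add: alpha_nth take_Suc_conv_app_nth dim_def)
lemma alpha_le_rr: "i \<le> dim V \<Longrightarrow> alpha C V ! i \<le> dim (rr C V)"
  using alpha_om om_le by blast

lemma filter_nth_take: "P (xs ! j) \<Longrightarrow> j < length xs \<Longrightarrow> filter P xs ! length (filter P (take j xs)) = xs ! j"
proof -
  assume a: "P (xs ! j)" "j < length xs"
  have "filter P xs = filter P (take j xs) @ xs ! j # filter P (drop (Suc j) xs)"
    using id_take_nth_drop[OF a(2)] a(1) by (metis filter.simps(2) filter_append)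
  then show ?thesis by (simp add: nth_append)
qed

lemma filter_map_filter: "(\<And>a. Q a \<Longrightarrow> P (g a)) \<Longrightarrow>
   filter (\<lambda>b. \<not> P b) (map g (filter (\<lambda>a. \<not> Q a) xs)) = filter (\<lambda>b. \<not> P b) (map g xs)"
  by (induction xs) auto

lemma take_len_filter: "take (length (filter P (take j xs))) (filter P xs) = filter P (take j xs)"
proof -
  have "filter P xs = filter P (take j xs) @ filter P (drop j xs)"
    by (metis append_take_drop_id filter_append)
  then show ?thesis by (metis append_eq_conv_conj)
qed

lemma alpha_GrF: assumes "\<And>a. is_identity D a \<Longrightarrow> is_identity E (FA G a)" "j \<le> dim V"
  shows "alpha E (fsimp G (rr D V)) ! (alpha D V ! j) = alpha E (fsimp G V) ! j"
proof -
  have b: "alpha D V ! j \<le> dim (fsimp G (rr D V))"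
    using alpha_le_rr[OF assms(2)] by (simp add: fsimp_def dim_def)
  have "alpha E (fsimp G (rr D V)) ! (alpha D V ! j) =
     length (filter (\<lambda>a. \<not> is_identity E a) (take (alpha D V ! j) (map (FA G) (filter (\<lambda>a. \<not> is_identity D a) (snd V)))))"
    using alpha_nth[OF b] by (simp add: fsimp_def rr_def)
  also have "\<dots> = length (filter (\<lambda>a. \<not> is_identity E a) (map (FA G) (filter (\<lambda>a. \<not> is_identity D a) (take j (snd V)))))"
    unfolding alpha_nth[OF assms(2)] take_map take_len_filter ..
  also have "\<dots> = length (filter (\<lambda>a. \<not> is_identity E a) (map (FA G) (take j (snd V))))"
    by (simp only: filter_map_filter[where P="is_identity E" and Q="is_identity D", OF assms(1)])
  also have "\<dots> = alpha E (fsimp G V) ! j"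
    using alpha_nth[of j "fsimp G V" E] assms(2) by (simp add: fsimp_def take_map dim_def)
  finally show ?thesis .
qed

lemma rr_GrF: assumes "\<And>a. is_identity D a \<Longrightarrow> is_identity E (FA G a)"
  shows "rr E (fsimp G (rr D V)) = rr E (fsimp G V)"
  using filter_map_filter[where P="is_identity E" and Q="is_identity D", OF assms(1)]
  by (simp add: rr_def fsimp_def)

fun rinv :: "('o, 'a) cat \<Rightarrow> 'a list \<Rightarrow> nat list" where
  "rinv C [] = [0]"
| "rinv C (a # as) = (if is_identity C a then map Suc (rinv C as) else 0 # map Suc (rinv C as))"

lemma alpha_Cons: "alpha C (x, a # as) = 0 # map (\<lambda>n. if is_identity C a then n else Suc n) (alpha C (y, as))"
proof (rule nth_equalityI)
  show "length (alpha C (x, a # as)) = length (0 # map (\<lambda>n. if is_identity C a then n else Suc n) (alpha C (y, as)))"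
    by (simp add: dim_def)
  fix i assume i: "i < length (alpha C (x, a # as))"
  show "alpha C (x, a # as) ! i = (0 # map (\<lambda>n. if is_identity C a then n else Suc n) (alpha C (y, as))) ! i"
  proof (cases i)
    case 0 then show ?thesis by simp
  next
    case (Suc k)
    then have "k \<le> dim (y, as)" using i by (simp add: dim_def)
    then show ?thesis using Suc i by (simp add: alpha_nth dim_def)
  qed
qed

lemma rinv_len: "length (rinv C as) = Suc (length (filter (\<lambda>a. \<not> is_identity C a) as))"
  by (induction as) auto
lemma rinv_bound: "i \<in> set (rinv C as) \<Longrightarrow> i \<le> length as"
  by (induction as arbitrary: i) (auto split: if_splits)
lemma rinv_sorted: "sorted (rinv C as)"
  by (induction as) (auto simp: sorted_map)

lemma rinv_ok: "is_rinv (rinv C as) (alpha C (x, as)) (length (filter (\<lambda>a. \<not> is_identity C a) as)) (length as)"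
proof (induction as arbitrary: x)
  case Nil
  then show ?case by (simp add: is_rinv_def ord_map_def map_comp_def alpha_def dim_def upt_Suc)
next
  case (Cons a as)
  have om: "ord_map (rinv C (a # as)) (length (filter (\<lambda>a. \<not> is_identity C a) (a # as))) (length (a # as))"
    unfolding ord_map_def using rinv_len rinv_sorted rinv_bound by (metis)
  have ih: "map_comp (alpha C (x, as)) (rinv C as) = [0..<Suc (length (filter (\<lambda>a. \<not> is_identity C a) as))]"
    using Cons.IH unfolding is_rinv_def by blast
  have bd: "\<And>i. i \<in> set (rinv C as) \<Longrightarrow> i < length (alpha C (x, as))"
    using rinv_bound by (fastforce simp: dim_def)
  have "map_comp (alpha C (x, a # as)) (rinv C (a # as)) =
        [0..<Suc (length (filter (\<lambda>a. \<not> is_identity C a) (a # as)))]"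
  proof (cases "is_identity C a")
    case True
    then show ?thesis using ih unfolding alpha_Cons[of C x a as x] map_comp_def by (simp add: comp_def)
  next
    case False
    have "map_comp (alpha C (x, a # as)) (rinv C (a # as)) =
          0 # map Suc (map_comp (alpha C (x, as)) (rinv C as))"
      using False bd unfolding alpha_Cons[of C x a as x] map_comp_def by simp
    also have "\<dots> = 0 # map Suc [0..<Suc (length (filter (\<lambda>a. \<not> is_identity C a) as))]" using ih by simp
    also have "\<dots> = [0..<Suc (length (filter (\<lambda>a. \<not> is_identity C a) (a # as)))]"
      using False by (simp add: map_Suc_upt upt_conv_Cons del: upt_Suc)
    finally show ?thesis .
  qed
  then show ?case using om unfolding is_rinv_def by blast
qed

lemma rinv_ex: "\<exists>\<sigma>. is_rinv \<sigma> (alpha C V) (dim (rr C V)) (dim V)"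
proof -
  obtain x as where V: "V = (x, as)" by fastforce
  show ?thesis using rinv_ok[of C as x] V by (auto simp: rr_def dim_def)
qed

lemma rinv_nth: "is_rinv \<sigma> \<alpha> p q \<Longrightarrow> i \<le> p \<Longrightarrow> \<alpha> ! (\<sigma> ! i) = i"
  unfolding is_rinv_def
  by (metis less_Suc_eq_le mc_nth nth_upt om_len plus_nat.add_0)

definition iden :: "('o, 'a) cat \<Rightarrow> ('o, 'a) simplex \<Rightarrow> nat \<Rightarrow> nat \<Rightarrow> bool" where
  "iden C V a b \<longleftrightarrow> is_identity C (btw C V a b) \<and> is_identity C (btw C V b a)"

lemma iden_sym: "iden C V a b \<Longrightarrow> iden C V b a" by (simp add: iden_def)

context ccat begin

lemma is_identity_Id: "x \<in> Obj C \<Longrightarrow> is_identity C (Id C x)" by (auto simp: is_identity_def)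

lemma sim_Cons: "is_simplex C (x, a # as) \<longleftrightarrow> x \<in> Obj C \<and> a \<in> Arr C \<and> Dom C a = x \<and> is_simplex C (Cod C a, as)"
proof -
  have v: "\<And>i. vert C (x, a # as) (Suc i) = vert C (Cod C a, as) i" by (case_tac i) (auto simp: vert_def)
  show ?thesis
  proof
    assume s: "is_simplex C (x, a # as)"
    then have h: "x \<in> Obj C" "a \<in> Arr C" "set as \<subseteq> Arr C"
      "\<And>i. i < Suc (length as) \<Longrightarrow> Dom C ((a # as) ! i) = vert C (x, a # as) i"
      unfolding is_simplex_def dim_def by auto
    have "Dom C a = x" using h(4)[of 0] by simp
    moreover have "is_simplex C (Cod C a, as)"
      unfolding is_simplex_def dim_def using h dom_cod_obj[of a] h(4)[of "Suc _"] v by auto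
    ultimately show "x \<in> Obj C \<and> a \<in> Arr C \<and> Dom C a = x \<and> is_simplex C (Cod C a, as)" using h by blast
  next
    assume h: "x \<in> Obj C \<and> a \<in> Arr C \<and> Dom C a = x \<and> is_simplex C (Cod C a, as)"
    show "is_simplex C (x, a # as)"
      unfolding is_simplex_def dim_def
    proof (intro conjI allI impI)
      show "fst (x, a # as) \<in> Obj C" using h by simp
      show "set (snd (x, a # as)) \<subseteq> Arr C" using h unfolding is_simplex_def by auto
      fix i assume "i < length (snd (x, a # as))"
      then show "Dom C (snd (x, a # as) ! i) = vert C (x, a # as) i"
        using h v unfolding is_simplex_def dim_def by (cases i) auto
    qed
  qed
qed

lemma rr_sim_aux: "is_simplex C (x, as) \<Longrightarrow> is_simplex C (rr C (x, as))"
proof (induction as arbitrary: x)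
  case Nil then show ?case by (simp add: rr_def)
next
  case (Cons a as)
  have h: "x \<in> Obj C" "a \<in> Arr C" "Dom C a = x" "is_simplex C (Cod C a, as)" using Cons.prems sim_Cons by auto
  have ih: "is_simplex C (rr C (Cod C a, as))" using Cons.IH h by blast
  show ?case
  proof (cases "is_identity C a")
    case True
    then have "Cod C a = x" using is_identity_D h by auto
    then show ?thesis using True ih by (simp add: rr_def)
  next
    case False
    have "rr C (x, a # as) = (x, a # snd (rr C (Cod C a, as)))" using False by (simp add: rr_def)
    moreover have "rr C (Cod C a, as) = (Cod C a, snd (rr C (Cod C a, as)))" by (simp add: rr_def)
    ultimately show ?thesis using sim_Cons h ih by metis
  qed
qed

lemma rr_sim: "is_simplex C V \<Longrightarrow> is_simplex C (rr C V)"
  using rr_sim_aux by (metis prod.collapse)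

lemma rr_nondeg: "is_simplex C V \<Longrightarrow> nondeg C (rr C V)"
  unfolding nondeg_def using rr_sim by (simp add: rr_def)

lemma vert_rr: assumes "is_simplex C V" shows "j \<le> dim V \<Longrightarrow> vert C (rr C V) (alpha C V ! j) = vert C V j"
proof (induction j)
  case 0 then show ?case by simp
next
  case (Suc j)
  then have j: "j < dim V" by simp
  have a: "snd V ! j \<in> Arr C" "Dom C (snd V ! j) = vert C V j" using sim_arr assms j by auto
  show ?case
  proof (cases "is_identity C (snd V ! j)")
    case True
    then show ?thesis using alpha_Suc[OF j] Suc j is_identity_D a by auto
  next
    case False
    have "snd (rr C V) ! (alpha C V ! j) = snd V ! j"
      using filter_nth_take[of "\<lambda>a. \<not> is_identity C a" "snd V" j] False j
      by (simp add: rr_def alpha_nth dim_def)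
    then show ?thesis using alpha_Suc[OF j] False by simp
  qed
qed

lemma rr_fact: assumes "is_simplex C V" shows "simp_comp C (rr C V) (alpha C V) = V"
proof (rule sim_eqI)
  have r: "is_simplex C (rr C V)" using rr_sim assms by blast
  show "is_simplex C (simp_comp C (rr C V) (alpha C V))" using sc_sim[OF r alpha_om] .
  show "is_simplex C V" by fact
  show "fst (simp_comp C (rr C V) (alpha C V)) = fst V" by (simp add: sc_fst)
  show d: "dim (simp_comp C (rr C V) (alpha C V)) = dim V" using sc_dim by simp
  fix j assume "j < dim (simp_comp C (rr C V) (alpha C V))"
  then have j: "j < dim V" using d by simp
  have "btw C (simp_comp C (rr C V) (alpha C V)) j (Suc j) = btw C (rr C V) (alpha C V ! j) (alpha C V ! Suc j)"
    using sc_btw[OF r alpha_om, of j "Suc j"] j by (simp del: btw.simps)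
  also have "\<dots> = snd V ! j"
  proof (cases "is_identity C (snd V ! j)")
    case True
    have a: "snd V ! j \<in> Arr C" "Dom C (snd V ! j) = vert C V j" using sim_arr assms j by auto
    show ?thesis using True alpha_Suc[OF j] btw_le[of "alpha C V ! j" "alpha C V ! j" "rr C V"]
        vert_rr[OF assms, of j] j is_identity_D[OF True a(1)] a by simp
  next
    case False
    have lt: "alpha C V ! j < dim (rr C V)" using alpha_Suc[OF j, where C=C] False alpha_le_rr[of "Suc j" V C] j by simp
    have "snd (rr C V) ! (alpha C V ! j) = snd V ! j"
      using filter_nth_take[of "\<lambda>a. \<not> is_identity C a" "snd V" j] False j
      by (simp add: rr_def alpha_nth dim_def)
    then show ?thesis using alpha_Suc[OF j] False btw_step[OF r lt] by simp
  qed
  also have "\<dots> = btw C V j (Suc j)" using btw_step assms j by simp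
  finally show "btw C (simp_comp C (rr C V) (alpha C V)) j (Suc j) = btw C V j (Suc j)" .
qed

lemma btw_rr: assumes "is_simplex C V" "u \<le> dim V" "v \<le> dim V"
  shows "btw C (rr C V) (alpha C V ! u) (alpha C V ! v) = btw C V u v"
  using sc_btw[OF rr_sim[OF assms(1)] alpha_om, of u v] rr_fact[OF assms(1)] assms by simp

lemma nondeg_rr: "nondeg C V \<Longrightarrow> rr C V = V"
  unfolding nondeg_def rr_def by (simp add: filter_id_conv)

lemma nondeg_alpha: assumes "nondeg C V" shows "alpha C V = [0..<Suc (dim V)]"
proof (rule nth_equalityI)
  show "length (alpha C V) = length [0..<Suc (dim V)]" by simp
  fix i assume "i < length (alpha C V)"
  then have i: "i \<le> dim V" by simp
  have "\<forall>a\<in>set (take i (snd V)). \<not> is_identity C a" using assms by (auto simp: nondeg_def dest: in_set_takeD)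
  then have "filter (\<lambda>a. \<not> is_identity C a) (take i (snd V)) = take i (snd V)" by (rule filter_True)
  then show "alpha C V ! i = [0..<Suc (dim V)] ! i" using i
    by (simp add: alpha_nth nth_upt dim_def less_Suc_eq_le del: upt_Suc)
qed

lemma iden_le: "is_simplex C W \<Longrightarrow> a \<le> b \<Longrightarrow> b \<le> dim W \<Longrightarrow> iden C W a b \<longleftrightarrow> is_identity C (btw C W a b)"
  unfolding iden_def using btw_le[of a b W] vert_obj is_identity_Id by auto

lemma ident_btw: "is_simplex C W \<Longrightarrow> a \<le> b \<Longrightarrow> b \<le> dim W \<Longrightarrow> is_identity C (btw C W a b) \<Longrightarrow>
   btw C W a b = Id C (vert C W a) \<and> vert C W b = vert C W a"
  using btw_props[of W a b] is_identity_D by metis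

lemma iden_refl: "is_simplex C W \<Longrightarrow> a \<le> dim W \<Longrightarrow> iden C W a a"
  unfolding iden_def using btw_le[of a a W] vert_obj is_identity_Id by auto

lemma iden_tri: assumes "is_simplex C W" "x \<le> y" "y \<le> z" "z \<le> dim W"
  shows "(iden C W x y \<and> iden C W y z \<longrightarrow> iden C W x z) \<and> (iden C W x y \<and> iden C W x z \<longrightarrow> iden C W y z)
       \<and> (iden C W x z \<and> iden C W y z \<longrightarrow> iden C W x y)"
proof -
  have k: "btw C W x z = Comp C (btw C W y z) (btw C W x y)" using btw_trans assms by blast
  have g: "btw C W x y \<in> Arr C" "Dom C (btw C W x y) = vert C W x" "Cod C (btw C W x y) = vert C W y"
    using btw_props assms by auto
  have h: "btw C W y z \<in> Arr C" "Dom C (btw C W y z) = vert C W y" "Cod C (btw C W y z) = vert C W z"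
    using btw_props assms by auto
  have i1: "iden C W x y \<longleftrightarrow> is_identity C (btw C W x y)" using iden_le assms by auto
  have i2: "iden C W y z \<longleftrightarrow> is_identity C (btw C W y z)" using iden_le assms by auto
  have i3: "iden C W x z \<longleftrightarrow> is_identity C (btw C W x z)" using iden_le assms by auto
  have e1: "is_identity C (btw C W x y) \<Longrightarrow> btw C W x y = Id C (vert C W x) \<and> vert C W y = vert C W x"
    using ident_btw assms by auto
  have e2: "is_identity C (btw C W y z) \<Longrightarrow> btw C W y z = Id C (vert C W y) \<and> vert C W z = vert C W y"
    using ident_btw assms by auto
  show ?thesis
  proof (intro conjI impI)
    assume a: "iden C W x y \<and> iden C W y z"
    then show "iden C W x z" using i1 i2 i3 e1 e2 k id_left[of "btw C W x y"] g by auto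
  next
    assume a: "iden C W x y \<and> iden C W x z"
    then show "iden C W y z" using i1 i2 i3 e1 k id_right[of "btw C W y z"] h by auto
  next
    assume a: "iden C W x z \<and> iden C W y z"
    then show "iden C W x y" using i1 i2 i3 e2 k id_left[of "btw C W x y"] g by auto
  qed
qed

lemma iden_trans: assumes "is_simplex C W" "a \<le> dim W" "b \<le> dim W" "c \<le> dim W" "iden C W a b" "iden C W b c"
  shows "iden C W a c"
proof -
  have s: "\<And>u v. iden C W u v \<Longrightarrow> iden C W v u" by (rule iden_sym)
  consider "a \<le> b" "b \<le> c" | "a \<le> c" "c \<le> b" | "b \<le> a" "a \<le> c" | "b \<le> c" "c \<le> a" | "c \<le> a" "a \<le> b" | "c \<le> b" "b \<le> a"
    by linarith
  then show ?thesis
  proof cases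
    case 1 then show ?thesis using iden_tri[OF assms(1) 1 assms(4)] assms by blast
  next
    case 2 then show ?thesis using iden_tri[OF assms(1) 2 assms(3)] assms s by blast
  next
    case 3 then show ?thesis using iden_tri[OF assms(1) 3 assms(4)] assms s by blast
  next
    case 4 then show ?thesis using iden_tri[OF assms(1) 4 assms(2)] assms s by blast
  next
    case 5 then show ?thesis using iden_tri[OF assms(1) 5 assms(3)] assms s by blast
  next
    case 6 then show ?thesis using iden_tri[OF assms(1) 6 assms(2)] assms s by blast
  qed
qed

lemma iden_sc: "is_simplex C Y \<Longrightarrow> ord_map \<xi> p (dim Y) \<Longrightarrow> i \<le> p \<Longrightarrow> j \<le> p \<Longrightarrow>
  iden C (simp_comp C Y \<xi>) i j \<longleftrightarrow> iden C Y (\<xi> ! i) (\<xi> ! j)"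
  unfolding iden_def using sc_btw by simp

lemma iden_alpha: assumes "is_simplex C V" "u \<le> dim V" "v \<le> dim V" "alpha C V ! u = alpha C V ! v"
  shows "iden C V u v"
proof -
  have "btw C V u v = btw C (rr C V) (alpha C V ! u) (alpha C V ! u)" using btw_rr assms by metis
  moreover have "btw C V v u = btw C (rr C V) (alpha C V ! u) (alpha C V ! u)" using btw_rr assms by metis
  moreover have "is_identity C (btw C (rr C V) (alpha C V ! u) (alpha C V ! u))"
    using iden_refl[OF rr_sim[OF assms(1)] alpha_le_rr[OF assms(2)]] unfolding iden_def by blast
  ultimately show ?thesis unfolding iden_def by simp
qed

lemma iden_rr: "is_simplex C V \<Longrightarrow> u \<le> dim V \<Longrightarrow> v \<le> dim V \<Longrightarrow> iden C V u v \<Longrightarrow>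
   iden C (rr C V) (alpha C V ! u) (alpha C V ! v)"
  unfolding iden_def using btw_rr by simp

end

context cfun begin
lemma iden_fs: "is_simplex C X \<Longrightarrow> a \<le> dim X \<Longrightarrow> b \<le> dim X \<Longrightarrow> iden C X a b \<Longrightarrow> iden D (fsimp F X) a b"
  unfolding iden_def using fs_btw F_identity by simp
end


context ccat begin

lemma dmor_parts: "is_dmor C (T, W, \<mu>) \<longleftrightarrow> is_simplex C T \<and> is_simplex C W \<and> ord_map \<mu> (dim T) (dim W) \<and> simp_comp C W \<mu> = T"
  by (simp add: is_dmor_def src_def tgt_def mapof_def)

lemma dcomp_dmor: assumes "is_dmor C m" "is_dmor C n" "src n = tgt m" shows "is_dmor C (dcomp n m)"
proof -
  have m: "is_simplex C (src m)" "is_simplex C (tgt m)" "ord_map (mapof m) (dim (src m)) (dim (tgt m))"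
    "simp_comp C (tgt m) (mapof m) = src m" using assms(1) by (auto simp: is_dmor_def)
  have n: "is_simplex C (src n)" "is_simplex C (tgt n)" "ord_map (mapof n) (dim (src n)) (dim (tgt n))"
    "simp_comp C (tgt n) (mapof n) = src n" using assms(2) by (auto simp: is_dmor_def)
  have "simp_comp C (tgt n) (map_comp (mapof n) (mapof m)) = simp_comp C (simp_comp C (tgt n) (mapof n)) (mapof m)"
    using sc_comp[OF n(2), of "mapof n" "dim (src n)" "mapof m" "dim (src m)"] n m assms(3) by simp
  also have "\<dots> = src m" using n(4) m(4) assms(3) by simp
  finally show ?thesis using m n assms(3) om_comp[of "mapof n" "dim (src n)" "dim (tgt n)" "mapof m" "dim (src m)"]
    by (simp add: is_dmor_def dcomp_def src_def tgt_def mapof_def)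
qed

lemma did_dmor: "is_simplex C X \<Longrightarrow> is_dmor C (did X)"
  by (simp add: is_dmor_def did_def src_def tgt_def mapof_def om_id sc_id del: upt_Suc)

lemma elem_dmor: assumes "is_simplex C X" "is_surj_deg s (dim X)" "is_rinv d s (dim X) (Suc (dim X))"
  shows "is_dmor C (X, simp_comp C X s, d)"
proof -
  have os: "ord_map s (Suc (dim X)) (dim X)" using assms(2) by (simp add: is_surj_deg_def)
  have od: "ord_map d (dim X) (Suc (dim X))" and sd: "map_comp s d = [0..<Suc (dim X)]"
    using assms(3) by (auto simp: is_rinv_def)
  have dim: "dim (simp_comp C X s) = Suc (dim X)" using sc_dim om_len[OF os] by blast
  have "simp_comp C (simp_comp C X s) d = X" using sc_comp[OF assms(1) os od] sd sc_id[OF assms(1)] by simp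
  then show ?thesis using dmor_parts sc_sim[OF assms(1) os] assms(1) od dim by simp
qed

lemma dsim_props: "dsim C m m' \<Longrightarrow> is_dmor C m \<and> is_dmor C m' \<and> src m = src m' \<and> tgt m = tgt m'"
proof (induction rule: dsim.induct)
  case (elem X s d d')
  then show ?case using elem_dmor by (simp add: src_def tgt_def)
next
  case (refl m) then show ?case by simp
next
  case (sym m m') then show ?case by simp
next
  case (trans m m' m'') then show ?case by simp
next
  case (post m m' n)
  then show ?case using dcomp_dmor[of m n] dcomp_dmor[of m' n] by (simp add: dcomp_def src_def tgt_def)
next
  case (pre m m' n)
  then show ?case using dcomp_dmor[of n m] dcomp_dmor[of n m'] by (simp add: dcomp_def src_def tgt_def)
qed

lemma sc_cong: assumes "length a = length b" "vert C W (a ! 0) = vert C W (b ! 0)"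
  "\<And>i. i < length a - 1 \<Longrightarrow> btw C W (a ! i) (a ! Suc i) = btw C W (b ! i) (b ! Suc i)"
  shows "simp_comp C W a = simp_comp C W b"
proof -
  have "map (\<lambda>j. btw C W (a ! (j - 1)) (a ! j)) [1..<length a] = map (\<lambda>j. btw C W (b ! (j - 1)) (b ! j)) [1..<length b]"
  proof (rule map_cong)
    show "[1..<length a] = [1..<length b]" using assms(1) by simp
    fix x assume "x \<in> set [1..<length b]"
    then have x1: "1 \<le> x" "x < length a" using assms(1) by (simp_all only: set_upt atLeastLessThan_iff)
    then obtain i where x: "x = Suc i" "i < length a - 1" by (cases x) auto
    show "btw C W (a ! (x - 1)) (a ! x) = btw C W (b ! (x - 1)) (b ! x)" using assms(3)[OF x(2)] x(1) by simp
  qed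
  then show ?thesis unfolding simp_comp_def using assms(2) by simp
qed

end

context ccat begin

lemma single_step:
  assumes W: "is_simplex C W" and ok: "ord_map \<kappa> k (dim W)" and ok': "ord_map \<kappa>' k (dim W)"
    and jk: "j \<le> k" and agree: "\<And>i. i \<le> k \<Longrightarrow> i \<noteq> j \<Longrightarrow> \<kappa> ! i = \<kappa>' ! i"
    and le: "\<kappa> ! j \<le> \<kappa>' ! j" and idn: "is_identity C (btw C W (\<kappa> ! j) (\<kappa>' ! j))"
  shows "dsim C (simp_comp C W \<kappa>, W, \<kappa>) (simp_comp C W \<kappa>, W, \<kappa>')"
proof -
  define T where "T = simp_comp C W \<kappa>"
  have T: "is_simplex C T" "dim T = k" using sc_sim[OF W ok] sc_dim[OF om_len[OF ok]] T_def by auto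
  define s where "s = map (\<lambda>i. if i \<le> j then i else i - 1) [0..<Suc (Suc k)]"
  define d where "d = map (\<lambda>i. if i \<le> j then i else Suc i) [0..<Suc k]"
  define d' where "d' = map (\<lambda>i. if i < j then i else Suc i) [0..<Suc k]"
  define l where "l = map (\<lambda>i. if i \<le> j then \<kappa> ! i else \<kappa>' ! (i - 1)) [0..<Suc (Suc k)]"
  have s_nth: "\<And>i. i \<le> Suc k \<Longrightarrow> s ! i = (if i \<le> j then i else i - 1)"
    by (simp add: s_def nth_upt less_Suc_eq_le del: upt_Suc)
  have d_nth: "\<And>i. i \<le> k \<Longrightarrow> d ! i = (if i \<le> j then i else Suc i)"
    by (simp add: d_def nth_upt less_Suc_eq_le del: upt_Suc)
  have d'_nth: "\<And>i. i \<le> k \<Longrightarrow> d' ! i = (if i < j then i else Suc i)"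
    by (simp add: d'_def nth_upt less_Suc_eq_le del: upt_Suc)
  have l_nth: "\<And>i. i \<le> Suc k \<Longrightarrow> l ! i = (if i \<le> j then \<kappa> ! i else \<kappa>' ! (i - 1))"
    by (simp add: l_def nth_upt less_Suc_eq_le del: upt_Suc)
  have os: "ord_map s (Suc k) k"
    by (rule ord_mapI) (use jk in \<open>auto simp: s_def s_nth simp del: upt_Suc\<close>)
  have "set s = {0..k}"
  proof
    show "set s \<subseteq> {0..k}" using os unfolding ord_map_def by auto
    show "{0..k} \<subseteq> set s"
    proof
      fix x assume "x \<in> {0..k}"
      then have x: "x \<le> k" by simp
      show "x \<in> set s"
      proof (cases "x \<le> j")
        case True
        then show ?thesis using x unfolding s_def by (auto intro!: image_eqI[where x=x] simp del: upt_Suc)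
      next
        case False
        then show ?thesis using x unfolding s_def by (auto intro!: image_eqI[where x="Suc x"] simp del: upt_Suc)
      qed
    qed
  qed
  then have surj: "is_surj_deg s (dim T)" using os T by (simp add: is_surj_deg_def)
  have od: "ord_map d k (Suc k)" by (rule ord_mapI) (auto simp: d_def d_nth simp del: upt_Suc)
  have od': "ord_map d' k (Suc k)" by (rule ord_mapI) (auto simp: d'_def d'_nth simp del: upt_Suc)
  have sd: "map_comp s d = [0..<Suc k]"
    by (rule nth_equalityI) (auto simp: mc_nth d_def[symmetric] om_len[OF od] d_nth s_nth nth_upt less_Suc_eq_le simp del: upt_Suc)
  have sd': "map_comp s d' = [0..<Suc k]"
    by (rule nth_equalityI) (auto simp: mc_nth om_len[OF od'] d'_nth s_nth nth_upt less_Suc_eq_le simp del: upt_Suc)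
  have rd: "is_rinv d s (dim T) (Suc (dim T))" using od sd T by (simp add: is_rinv_def)
  have rd': "is_rinv d' s (dim T) (Suc (dim T))" using od' sd' T by (simp add: is_rinv_def)
  have e: "dsim C (T, simp_comp C T s, d) (T, simp_comp C T s, d')"
    using dsim.elem[OF T(1) surj rd rd'] .
  have kb: "\<And>i. i \<le> k \<Longrightarrow> \<kappa> ! i \<le> dim W" using om_le[OF ok] by blast
  have kb': "\<And>i. i \<le> k \<Longrightarrow> \<kappa>' ! i \<le> dim W" using om_le[OF ok'] by blast
  have km: "\<And>i i'. i \<le> i' \<Longrightarrow> i' \<le> k \<Longrightarrow> \<kappa> ! i \<le> \<kappa> ! i'" using om_mono[OF ok] by blast
  have km': "\<And>i i'. i \<le> i' \<Longrightarrow> i' \<le> k \<Longrightarrow> \<kappa>' ! i \<le> \<kappa>' ! i'" using om_mono[OF ok'] by blast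
  have ol: "ord_map l (Suc k) (dim W)"
  proof (rule ord_mapI)
    show "length l = Suc (Suc k)" by (simp add: l_def del: upt_Suc)
    fix i assume "i \<le> Suc k"
    then show "l ! i \<le> dim W" using l_nth kb kb' jk by auto
  next
    fix i i' assume ii: "i \<le> i'" "i' \<le> Suc k"
    show "l ! i \<le> l ! i'"
    proof (cases "i' \<le> j")
      case True then show ?thesis using ii l_nth km jk by auto
    next
      case False
      show ?thesis
      proof (cases "i \<le> j")
        case True
        have "\<kappa> ! i \<le> \<kappa> ! j" using km True jk by blast
        also have "\<dots> \<le> \<kappa>' ! j" by (rule le)
        also have "\<dots> \<le> \<kappa>' ! (i' - 1)" using km' False ii by auto
        finally show ?thesis using True False ii l_nth by auto
      next
        case f2: False
        then show ?thesis using False ii l_nth km' by auto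
      qed
    qed
  qed
  have mcs: "\<And>i. i \<le> Suc k \<Longrightarrow> map_comp \<kappa> s ! i = \<kappa> ! (s ! i)"
    using mc_nth om_len[OF os] by (simp add: less_Suc_eq_le)
  have vj: "btw C W (\<kappa> ! j) (\<kappa>' ! j) = Id C (vert C W (\<kappa> ! j)) \<and> vert C W (\<kappa>' ! j) = vert C W (\<kappa> ! j)"
    using ident_btw[OF W le kb'[OF jk] idn] .
  have "simp_comp C W l = simp_comp C W (map_comp \<kappa> s)"
  proof (rule sc_cong)
    show "length l = length (map_comp \<kappa> s)" using om_len[OF ol] om_len[OF os] by simp
    show "vert C W (l ! 0) = vert C W (map_comp \<kappa> s ! 0)" using l_nth[of 0] mcs[of 0] s_nth[of 0] by simp
    fix i assume "i < length l - 1"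
    then have i: "i < Suc k" using om_len[OF ol] by simp
    show "btw C W (l ! i) (l ! Suc i) = btw C W (map_comp \<kappa> s ! i) (map_comp \<kappa> s ! Suc i)"
    proof -
      consider "Suc i \<le> j" | "i = j" | "i = Suc j" | "i > Suc j" by linarith
      then show ?thesis
      proof cases
        case 1 then show ?thesis using i l_nth mcs s_nth by simp
      next
        case 2
        then show ?thesis using i l_nth mcs s_nth vj btw_le[of "\<kappa> ! j" "\<kappa> ! j" W] by simp
      next
        case 3
        have sj: "Suc j \<le> k" using 3 i by simp
        have eq: "\<kappa> ! Suc j = \<kappa>' ! Suc j" using agree sj by simp
        have c1: "\<kappa>' ! j \<le> \<kappa>' ! Suc j" using km' sj by simp
        have c2: "\<kappa>' ! Suc j \<le> dim W" using kb' sj by simp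
        have tr: "btw C W (\<kappa> ! j) (\<kappa>' ! Suc j) = Comp C (btw C W (\<kappa>' ! j) (\<kappa>' ! Suc j)) (btw C W (\<kappa> ! j) (\<kappa>' ! j))"
          using btw_trans[OF W le c1 c2] .
        have p: "btw C W (\<kappa>' ! j) (\<kappa>' ! Suc j) \<in> Arr C" "Dom C (btw C W (\<kappa>' ! j) (\<kappa>' ! Suc j)) = vert C W (\<kappa>' ! j)"
          using btw_props[OF W c1 c2] by auto
        have "btw C W (\<kappa> ! j) (\<kappa>' ! Suc j) = btw C W (\<kappa>' ! j) (\<kappa>' ! Suc j)"
          using tr vj p id_right[OF p(1)] by simp
        then show ?thesis using 3 i l_nth mcs s_nth eq by simp
      next
        case 4
        then show ?thesis using i l_nth mcs s_nth agree by simp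
      qed
    qed
  qed
  also have "\<dots> = simp_comp C T s" using sc_comp[OF W ok os] T_def by simp
  finally have ls: "simp_comp C W l = simp_comp C T s" .
  have dTs: "dim (simp_comp C T s) = Suc k" using sc_dim om_len[OF os] by blast
  have nd: "is_dmor C (simp_comp C T s, W, l)"
    using dmor_parts sc_sim[OF T(1)] os T W ol dTs ls by simp
  have p: "dsim C (dcomp (simp_comp C T s, W, l) (T, simp_comp C T s, d)) (dcomp (simp_comp C T s, W, l) (T, simp_comp C T s, d'))"
    using dsim.post[OF e nd] by (simp add: src_def tgt_def)
  have ld: "map_comp l d = \<kappa>"
    by (rule nth_equalityI) (auto simp: om_len[OF od] om_len[OF ok] mc_nth d_nth l_nth less_Suc_eq_le agree)
  have ld': "map_comp l d' = \<kappa>'"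
    by (rule nth_equalityI) (auto simp: om_len[OF od'] om_len[OF ok'] mc_nth d'_nth l_nth less_Suc_eq_le agree)
  show ?thesis using p ld ld' T_def by (simp add: dcomp_def src_def tgt_def mapof_def)
qed

end

context ccat begin

lemma up_step:
  assumes W: "is_simplex C W" and om: "ord_map \<mu> k (dim W)" and on: "ord_map \<nu> k (dim W)"
    and h: "\<And>i. i \<le> k \<Longrightarrow> \<mu> ! i \<le> \<nu> ! i \<and> is_identity C (btw C W (\<mu> ! i) (\<nu> ! i))"
  shows "dsim C (simp_comp C W \<mu>, W, \<mu>) (simp_comp C W \<mu>, W, \<nu>)"
proof -
  define T where "T = simp_comp C W \<mu>"
  define \<kappa> where "\<kappa> n = map (\<lambda>i. if i < n then \<mu> ! i else \<nu> ! i) [0..<Suc k]" for n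
  have kn: "\<And>n i. i \<le> k \<Longrightarrow> \<kappa> n ! i = (if i < n then \<mu> ! i else \<nu> ! i)"
    by (simp add: \<kappa>_def nth_upt less_Suc_eq_le del: upt_Suc)
  have lk: "length (\<kappa> m) = Suc k" for m by (simp add: \<kappa>_def del: upt_Suc)
  have ok: "ord_map (\<kappa> n) k (dim W)" for n
  proof (rule ord_mapI)
    show "length (\<kappa> n) = Suc k" by (simp add: \<kappa>_def del: upt_Suc)
    fix i assume "i \<le> k" then show "\<kappa> n ! i \<le> dim W" using kn om_le[OF om] om_le[OF on] by simp
  next
    fix i j assume ij: "i \<le> j" "j \<le> k"
    show "\<kappa> n ! i \<le> \<kappa> n ! j"
    proof (cases "j < n")
      case True then show ?thesis using ij kn om_mono[OF om] by simp
    next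
      case False
      show ?thesis
      proof (cases "i < n")
        case True
        have "\<mu> ! i \<le> \<nu> ! i" using h ij by simp
        also have "\<dots> \<le> \<nu> ! j" using om_mono[OF on] ij by simp
        finally show ?thesis using True False kn ij by simp
      next
        case f2: False then show ?thesis using False ij kn om_mono[OF on] by simp
      qed
    qed
  qed
  have dT: "is_dmor C (T, W, \<mu>)" using dmor_parts sc_sim[OF W om] W om sc_dim[OF om_len[OF om]] T_def by simp
  have main: "\<And>n. n + dd = Suc k \<Longrightarrow> dsim C (T, W, \<mu>) (T, W, \<kappa> n)" for dd
  proof (induction dd)
    case 0
    then have "\<kappa> n = \<mu>" by (intro nth_equalityI) (auto simp: om_len[OF om] kn lk less_Suc_eq_le)
    then show ?case using dsim.refl[OF dT] by simp
  next
    case (Suc dd)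
    then have nk: "n \<le> k" by simp
    have ih: "dsim C (T, W, \<mu>) (T, W, \<kappa> (Suc n))" using Suc by simp
    then have "is_dmor C (T, W, \<kappa> (Suc n))" using dsim_props by blast
    then have sc: "simp_comp C W (\<kappa> (Suc n)) = T" using dmor_parts by blast
    have "dsim C (simp_comp C W (\<kappa> (Suc n)), W, \<kappa> (Suc n)) (simp_comp C W (\<kappa> (Suc n)), W, \<kappa> n)"
    proof (rule single_step[OF W ok ok nk])
      show "\<And>i. i \<le> k \<Longrightarrow> i \<noteq> n \<Longrightarrow> \<kappa> (Suc n) ! i = \<kappa> n ! i" using kn by auto
      show "\<kappa> (Suc n) ! n \<le> \<kappa> n ! n" using kn h nk by simp
      show "is_identity C (btw C W (\<kappa> (Suc n) ! n) (\<kappa> n ! n))" using kn h nk by simp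
    qed
    then show ?case using sc ih dsim.trans by metis
  qed
  have "\<kappa> 0 = \<nu>" by (intro nth_equalityI) (auto simp: om_len[OF on] kn lk less_Suc_eq_le)
  then show ?thesis using main[of 0 "Suc k"] T_def by simp
qed

lemma key:
  assumes d1: "is_dmor C (T, W, \<mu>)" and d2: "is_dmor C (T, W, \<mu>')"
    and h: "\<And>i. i \<le> dim T \<Longrightarrow> iden C W (\<mu> ! i) (\<mu>' ! i)"
  shows "dsim C (T, W, \<mu>) (T, W, \<mu>')"
proof -
  have W: "is_simplex C W" and o1: "ord_map \<mu> (dim T) (dim W)" and s1: "simp_comp C W \<mu> = T"
    and o2: "ord_map \<mu>' (dim T) (dim W)" and s2: "simp_comp C W \<mu>' = T"
    using d1 d2 dmor_parts by auto
  define \<nu> where "\<nu> = map (\<lambda>i. max (\<mu> ! i) (\<mu>' ! i)) [0..<Suc (dim T)]"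
  have nn: "\<And>i. i \<le> dim T \<Longrightarrow> \<nu> ! i = max (\<mu> ! i) (\<mu>' ! i)"
    by (simp add: \<nu>_def nth_upt less_Suc_eq_le del: upt_Suc)
  have on: "ord_map \<nu> (dim T) (dim W)"
  proof (rule ord_mapI)
    show "length \<nu> = Suc (dim T)" by (simp add: \<nu>_def del: upt_Suc)
    fix i assume "i \<le> dim T" then show "\<nu> ! i \<le> dim W" using nn om_le[OF o1] om_le[OF o2] by simp
  next
    fix i j assume "i \<le> j" "j \<le> dim T"
    then show "\<nu> ! i \<le> \<nu> ! j" using nn[of i] nn[of j] om_mono[OF o1] om_mono[OF o2] max.mono by (metis order.trans)
  qed
  have idr: "\<And>a. a \<le> dim W \<Longrightarrow> is_identity C (btw C W a a)" using iden_refl[OF W] iden_def by blast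
  have h1: "\<And>i. i \<le> dim T \<Longrightarrow> \<mu> ! i \<le> \<nu> ! i \<and> is_identity C (btw C W (\<mu> ! i) (\<nu> ! i))"
  proof -
    fix i assume i: "i \<le> dim T"
    show "\<mu> ! i \<le> \<nu> ! i \<and> is_identity C (btw C W (\<mu> ! i) (\<nu> ! i))"
    proof (cases "\<mu>' ! i \<le> \<mu> ! i")
      case True then show ?thesis using nn i idr om_le[OF o1] by simp
    next
      case False then show ?thesis using nn i h iden_le[OF W, of "\<mu> ! i" "\<mu>' ! i"] om_le[OF o2] by simp
    qed
  qed
  have h2: "\<And>i. i \<le> dim T \<Longrightarrow> \<mu>' ! i \<le> \<nu> ! i \<and> is_identity C (btw C W (\<mu>' ! i) (\<nu> ! i))"
  proof -
    fix i assume i: "i \<le> dim T"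
    show "\<mu>' ! i \<le> \<nu> ! i \<and> is_identity C (btw C W (\<mu>' ! i) (\<nu> ! i))"
    proof (cases "\<mu> ! i \<le> \<mu>' ! i")
      case True then show ?thesis using nn i idr om_le[OF o2] by (simp add: max_def)
    next
      case False then show ?thesis using nn i iden_sym[OF h[of i]] iden_le[OF W, of "\<mu>' ! i" "\<mu> ! i"] om_le[OF o1] by simp
    qed
  qed
  have a: "dsim C (T, W, \<mu>) (T, W, \<nu>)" using up_step[OF W o1 on h1] s1 by simp
  have b: "dsim C (T, W, \<mu>') (T, W, \<nu>)" using up_step[OF W o2 on h2] s2 by simp
  show ?thesis using dsim.trans[OF a dsim.sym[OF b]] .
qed

end

context cfun begin

lemma Sd_mor_eq: "Sd_mor D F m \<sigma> = (rr D (fsimp F (src m)), rr D (fsimp F (tgt m)),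
     map_comp (alpha D (fsimp F (tgt m))) (map_comp (mapof m) \<sigma>))"
  by (simp add: Sd_mor_def Sd_obj_def)

lemma sdc: assumes "sd_choice D F X \<sigma>"
  shows "ord_map \<sigma> (dim (rr D (fsimp F X))) (dim X)"
    "\<And>i. i \<le> dim (rr D (fsimp F X)) \<Longrightarrow> alpha D (fsimp F X) ! (\<sigma> ! i) = i"
    "\<And>i. i \<le> dim (rr D (fsimp F X)) \<Longrightarrow> \<sigma> ! i \<le> dim X"
  using assms rinv_nth om_le unfolding sd_choice_def Sd_obj_def is_rinv_def by (auto simp: is_rinv_def)

lemma sd_ex: "\<exists>\<sigma>. sd_choice D F X \<sigma>"
  using rinv_ex[of D "fsimp F X"] unfolding sd_choice_def Sd_obj_def by simp

lemma Sd_dmor: assumes m: "is_dmor C m" and s: "sd_choice D F (src m) \<sigma>"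
  shows "is_dmor D (Sd_mor D F m \<sigma>)"
proof -
  let ?X = "src m" and ?Y = "tgt m" and ?\<xi> = "mapof m"
  have X: "is_simplex C ?X" and Y: "is_simplex C ?Y" and o\<xi>: "ord_map ?\<xi> (dim ?X) (dim ?Y)"
    and sc: "simp_comp C ?Y ?\<xi> = ?X" using m by (auto simp: is_dmor_def)
  let ?p = "dim (rr D (fsimp F ?X))"
  have o\<sigma>: "ord_map \<sigma> ?p (dim ?X)" and a\<sigma>: "map_comp (alpha D (fsimp F ?X)) \<sigma> = [0..<Suc ?p]"
    using s unfolding sd_choice_def Sd_obj_def is_rinv_def by auto
  have fX: "is_simplex D (fsimp F ?X)" and fY: "is_simplex D (fsimp F ?Y)" using fs_sim X Y by auto
  have rX: "is_simplex D (rr D (fsimp F ?X))" and rY: "is_simplex D (rr D (fsimp F ?Y))" using D.rr_sim fX fY by auto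
  have o\<xi>\<sigma>: "ord_map (map_comp ?\<xi> \<sigma>) ?p (dim (fsimp F ?Y))" using om_comp[OF o\<xi> o\<sigma>] by simp
  have aY: "ord_map (alpha D (fsimp F ?Y)) (dim (fsimp F ?Y)) (dim (rr D (fsimp F ?Y)))" by (rule alpha_om)
  have aX: "ord_map (alpha D (fsimp F ?X)) (dim (fsimp F ?X)) ?p" by (rule alpha_om)
  have "simp_comp D (rr D (fsimp F ?Y)) (map_comp (alpha D (fsimp F ?Y)) (map_comp ?\<xi> \<sigma>))
      = simp_comp D (simp_comp D (rr D (fsimp F ?Y)) (alpha D (fsimp F ?Y))) (map_comp ?\<xi> \<sigma>)"
    using D.sc_comp[OF rY aY o\<xi>\<sigma>] by simp
  also have "\<dots> = simp_comp D (fsimp F ?Y) (map_comp ?\<xi> \<sigma>)" using D.rr_fact[OF fY] by simp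
  also have "\<dots> = simp_comp D (simp_comp D (fsimp F ?Y) ?\<xi>) \<sigma>"
    using D.sc_comp[OF fY _ o\<sigma>] o\<xi> by simp
  also have "\<dots> = simp_comp D (fsimp F ?X) \<sigma>" using fs_sc[OF Y o\<xi>] sc by simp
  also have "\<dots> = simp_comp D (simp_comp D (rr D (fsimp F ?X)) (alpha D (fsimp F ?X))) \<sigma>"
    using D.rr_fact[OF fX] by simp
  also have "\<dots> = simp_comp D (rr D (fsimp F ?X)) [0..<Suc ?p]"
    using D.sc_comp[OF rX aX] o\<sigma> a\<sigma> by simp
  also have "\<dots> = rr D (fsimp F ?X)" using D.sc_id[OF rX] .
  finally have e: "simp_comp D (rr D (fsimp F ?Y)) (map_comp (alpha D (fsimp F ?Y)) (map_comp ?\<xi> \<sigma>)) = rr D (fsimp F ?X)" .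
  have om: "ord_map (map_comp (alpha D (fsimp F ?Y)) (map_comp ?\<xi> \<sigma>)) ?p (dim (rr D (fsimp F ?Y)))"
    using om_comp[OF aY o\<xi>\<sigma>] .
  show ?thesis unfolding Sd_mor_eq using D.dmor_parts rX rY om e by simp
qed

lemma Sd_nth: assumes m: "is_dmor C m" and s: "sd_choice D F (src m) \<sigma>" and i: "i \<le> dim (rr D (fsimp F (src m)))"
  shows "mapof (Sd_mor D F m \<sigma>) ! i = alpha D (fsimp F (tgt m)) ! (mapof m ! (\<sigma> ! i))"
proof -
  have o\<xi>: "ord_map (mapof m) (dim (src m)) (dim (tgt m))" using m by (auto simp: is_dmor_def)
  have o\<sigma>: "ord_map \<sigma> (dim (rr D (fsimp F (src m)))) (dim (src m))" using sdc[OF s] by blast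
  show ?thesis unfolding Sd_mor_eq mapof_def
    using mc_nth om_len[OF o\<sigma>] om_len[OF o\<xi>] om_le[OF o\<sigma> i] i by (simp add: less_Suc_eq_le)
qed

lemma Sd_eq:
  assumes m: "is_dmor C m" and m': "is_dmor C m'" and ss: "src m' = src m" and tt: "tgt m' = tgt m"
    and s: "sd_choice D F (src m) \<sigma>" and s': "sd_choice D F (src m) \<sigma>'"
    and h: "\<And>i. i \<le> dim (rr D (fsimp F (src m))) \<Longrightarrow>
         iden D (fsimp F (tgt m)) (mapof m ! (\<sigma> ! i)) (mapof m' ! (\<sigma>' ! i))"
  shows "dsim D (Sd_mor D F m \<sigma>) (Sd_mor D F m' \<sigma>')"
proof -
  have d1: "is_dmor D (Sd_mor D F m \<sigma>)" using Sd_dmor m s by blast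
  have d2: "is_dmor D (Sd_mor D F m' \<sigma>')" using Sd_dmor m' s' ss by simp
  have Y: "is_simplex C (tgt m)" using m by (simp add: is_dmor_def)
  have o\<xi>: "ord_map (mapof m) (dim (src m)) (dim (tgt m))" using m by (auto simp: is_dmor_def)
  have o\<xi>': "ord_map (mapof m') (dim (src m)) (dim (tgt m))" using m' ss tt by (auto simp: is_dmor_def)
  let ?T = "rr D (fsimp F (src m))" and ?W = "rr D (fsimp F (tgt m))"
  have e1: "Sd_mor D F m \<sigma> = (?T, ?W, mapof (Sd_mor D F m \<sigma>))" by (simp add: Sd_mor_eq mapof_def)
  have e2: "Sd_mor D F m' \<sigma>' = (?T, ?W, mapof (Sd_mor D F m' \<sigma>'))" using ss tt by (simp add: Sd_mor_eq mapof_def)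
  show ?thesis
  proof (subst e1, subst e2, rule D.key)
    show "is_dmor D (?T, ?W, mapof (Sd_mor D F m \<sigma>))" using d1 e1 by simp
    show "is_dmor D (?T, ?W, mapof (Sd_mor D F m' \<sigma>'))" using d2 e2 by simp
    fix i assume i: "i \<le> dim ?T"
    have b1: "mapof m ! (\<sigma> ! i) \<le> dim (fsimp F (tgt m))" using om_le[OF o\<xi>] sdc(3)[OF s i] by simp
    have b2: "mapof m' ! (\<sigma>' ! i) \<le> dim (fsimp F (tgt m))" using om_le[OF o\<xi>'] sdc(3)[OF s' i] by simp
    show "iden D ?W (mapof (Sd_mor D F m \<sigma>) ! i) (mapof (Sd_mor D F m' \<sigma>') ! i)"
      using Sd_nth[OF m s i] Sd_nth[OF m', of \<sigma>' i] ss tt s' i D.iden_rr[OF fs_sim[OF Y] b1 b2 h[OF i]] by simp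
  qed
qed

end

context cfun begin

lemma Sd_comp:
  assumes m: "is_dmor C m" and n: "is_dmor C n" and sn: "src n = tgt m"
    and s: "sd_choice D F (src m) \<sigma>" and t: "sd_choice D F (src n) \<tau>" and r: "sd_choice D F (src m) \<rho>"
  shows "dsim D (Sd_mor D F (dcomp n m) \<rho>) (dcomp (Sd_mor D F n \<tau>) (Sd_mor D F m \<sigma>))"
proof -
  have nm: "is_dmor C (dcomp n m)" using C.dcomp_dmor m n sn by blast
  have snm: "src (dcomp n m) = src m" "tgt (dcomp n m) = tgt n" "mapof (dcomp n m) = map_comp (mapof n) (mapof m)"
    by (simp_all add: dcomp_def src_def tgt_def mapof_def)
  have d1: "is_dmor D (Sd_mor D F (dcomp n m) \<rho>)" using Sd_dmor[OF nm] r snm by simp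
  have d2': "is_dmor D (Sd_mor D F n \<tau>)" "is_dmor D (Sd_mor D F m \<sigma>)" using Sd_dmor n t m s by auto
  have d2: "is_dmor D (dcomp (Sd_mor D F n \<tau>) (Sd_mor D F m \<sigma>))"
    using D.dcomp_dmor[OF d2'(2) d2'(1)] sn by (simp add: Sd_mor_eq src_def tgt_def)
  let ?T = "rr D (fsimp F (src m))" and ?W = "rr D (fsimp F (tgt n))"
  have e1: "Sd_mor D F (dcomp n m) \<rho> = (?T, ?W, mapof (Sd_mor D F (dcomp n m) \<rho>))"
    using snm by (simp add: Sd_mor_eq mapof_def)
  have e2: "dcomp (Sd_mor D F n \<tau>) (Sd_mor D F m \<sigma>) = (?T, ?W, mapof (dcomp (Sd_mor D F n \<tau>) (Sd_mor D F m \<sigma>)))"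
    by (simp add: Sd_mor_eq mapof_def dcomp_def src_def tgt_def)
  have X: "is_simplex C (src m)" and Y: "is_simplex C (tgt m)" and Z: "is_simplex C (tgt n)"
    using m n by (auto simp: is_dmor_def)
  have o\<xi>: "ord_map (mapof m) (dim (src m)) (dim (tgt m))" and sc\<xi>: "simp_comp C (tgt m) (mapof m) = src m"
    using m by (auto simp: is_dmor_def)
  have o\<eta>: "ord_map (mapof n) (dim (tgt m)) (dim (tgt n))" and sc\<eta>: "simp_comp C (tgt n) (mapof n) = tgt m"
    using n sn by (auto simp: is_dmor_def)
  have fX: "is_simplex D (fsimp F (src m))" and fY: "is_simplex D (fsimp F (tgt m))" and fZ: "is_simplex D (fsimp F (tgt n))"
    using fs_sim X Y Z by auto
  have fXe: "fsimp F (src m) = simp_comp D (fsimp F (tgt m)) (mapof m)" using fs_sc[OF Y o\<xi>] sc\<xi> by simp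
  have fYe: "fsimp F (tgt m) = simp_comp D (fsimp F (tgt n)) (mapof n)" using fs_sc[OF Z o\<eta>] sc\<eta> by simp
  show ?thesis
  proof (subst e1, subst e2, rule D.key)
    show "is_dmor D (?T, ?W, mapof (Sd_mor D F (dcomp n m) \<rho>))" using d1 e1 by simp
    show "is_dmor D (?T, ?W, mapof (dcomp (Sd_mor D F n \<tau>) (Sd_mor D F m \<sigma>)))" using d2 e2 by simp
    fix i assume i: "i \<le> dim ?T"
    let ?\<xi> = "mapof m" and ?\<eta> = "mapof n" and ?aY = "alpha D (fsimp F (tgt m))"
    define y1 where "y1 = ?\<xi> ! (\<rho> ! i)"
    define w where "w = ?\<xi> ! (\<sigma> ! i)"
    define y2 where "y2 = \<tau> ! (?aY ! w)"
    have ri: "\<rho> ! i \<le> dim (src m)" "\<sigma> ! i \<le> dim (src m)" using sdc(3) r s i by auto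
    have y1b: "y1 \<le> dim (tgt m)" and wb: "w \<le> dim (tgt m)" using om_le[OF o\<xi>] ri y1_def w_def by auto
    have awb: "?aY ! w \<le> dim (rr D (fsimp F (src n)))" using alpha_le_rr[of w "fsimp F (tgt m)" D] wb sn by simp
    have y2b: "y2 \<le> dim (tgt m)" using sdc(3)[OF t awb] sn y2_def by simp
    have a2: "?aY ! y2 = ?aY ! w" using sdc(2)[OF t awb] sn y2_def by simp
    have i1: "iden D (fsimp F (src m)) (\<rho> ! i) (\<sigma> ! i)"
      using D.iden_alpha[OF fX] ri sdc(2)[OF r i] sdc(2)[OF s i] by simp
    have i2: "iden D (fsimp F (tgt m)) y1 w"
      using i1 D.iden_sc[OF fY _ ri] o\<xi> fXe y1_def w_def by simp
    have i3: "iden D (fsimp F (tgt m)) w y2" using D.iden_alpha[OF fY] wb y2b a2 by simp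
    have i4: "iden D (fsimp F (tgt m)) y1 y2" using D.iden_trans[OF fY _ _ _ i2 i3] y1b wb y2b by simp
    have i5: "iden D (fsimp F (tgt n)) (?\<eta> ! y1) (?\<eta> ! y2)"
      using i4 D.iden_sc[OF fZ _ y1b y2b] o\<eta> fYe by simp
    have b1: "?\<eta> ! y1 \<le> dim (fsimp F (tgt n))" "?\<eta> ! y2 \<le> dim (fsimp F (tgt n))" using om_le[OF o\<eta>] y1b y2b by auto
    have i6: "iden D ?W (alpha D (fsimp F (tgt n)) ! (?\<eta> ! y1)) (alpha D (fsimp F (tgt n)) ! (?\<eta> ! y2))"
      using D.iden_rr[OF fZ b1 i5] .
    have l: "mapof (Sd_mor D F (dcomp n m) \<rho>) ! i = alpha D (fsimp F (tgt n)) ! (?\<eta> ! y1)"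
      using Sd_nth[OF nm, of \<rho> i] snm r i y1_def mc_nth[of "\<rho> ! i" ?\<xi> ?\<eta>] om_len[OF o\<xi>] ri by (simp add: less_Suc_eq_le)
    have i': "i < length (mapof (Sd_mor D F m \<sigma>))" using om_len[OF sdc(1)[OF s]] i by (simp add: Sd_mor_eq mapof_def)
    have r2: "mapof (dcomp (Sd_mor D F n \<tau>) (Sd_mor D F m \<sigma>)) ! i = mapof (Sd_mor D F n \<tau>) ! (mapof (Sd_mor D F m \<sigma>) ! i)"
      using mc_nth[OF i'] by (simp add: dcomp_def mapof_def)
    have r3: "mapof (Sd_mor D F m \<sigma>) ! i = ?aY ! w" using Sd_nth[OF m s i] w_def by simp
    have r4: "mapof (Sd_mor D F n \<tau>) ! (?aY ! w) = alpha D (fsimp F (tgt n)) ! (?\<eta> ! y2)"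
      using Sd_nth[OF n t awb] sn y2_def by simp
    show "iden D ?W (mapof (Sd_mor D F (dcomp n m) \<rho>) ! i) (mapof (dcomp (Sd_mor D F n \<tau>) (Sd_mor D F m \<sigma>)) ! i)"
      using i6 l r2 r3 r4 by simp
  qed
qed

end

context cfun begin

lemma Sd_wd: assumes "dsim C m m'"
  shows "sd_choice D F (src m) \<sigma> \<Longrightarrow> sd_choice D F (src m') \<sigma>' \<Longrightarrow> dsim D (Sd_mor D F m \<sigma>) (Sd_mor D F m' \<sigma>')"
  using assms
proof (induction arbitrary: \<sigma> \<sigma>' rule: dsim.induct)
  case (elem X s d d')
  have os: "ord_map s (Suc (dim X)) (dim X)" using elem.hyps(2) by (simp add: is_surj_deg_def)
  have m: "is_dmor C (X, simp_comp C X s, d)" using C.elem_dmor elem.hyps by blast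
  have m': "is_dmor C (X, simp_comp C X s, d')" using C.elem_dmor elem.hyps by blast
  have od: "ord_map d (dim X) (Suc (dim X))" using elem.hyps(3) by (simp add: is_rinv_def)
  have od': "ord_map d' (dim X) (Suc (dim X))" using elem.hyps(4) by (simp add: is_rinv_def)
  have fX: "is_simplex D (fsimp F X)" using fs_sim elem.hyps(1) by blast
  have fe: "fsimp F (simp_comp C X s) = simp_comp D (fsimp F X) s" using fs_sc[OF elem.hyps(1) os] .
  show ?case
  proof (rule Sd_eq[OF m m'])
    show "sd_choice D F (src (X, simp_comp C X s, d)) \<sigma>" using elem.prems by (simp add: src_def)
    show "sd_choice D F (src (X, simp_comp C X s, d)) \<sigma>'" using elem.prems by (simp add: src_def)
    fix i assume i: "i \<le> dim (rr D (fsimp F (src (X, simp_comp C X s, d))))"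
    then have i': "i \<le> dim (rr D (fsimp F X))" by (simp add: src_def)
    have sb: "\<sigma> ! i \<le> dim X" "\<sigma>' ! i \<le> dim X" using sdc(3) elem.prems i' by (auto simp: src_def)
    have db: "d ! (\<sigma> ! i) \<le> Suc (dim X)" "d' ! (\<sigma>' ! i) \<le> Suc (dim X)" using om_le od od' sb by auto
    have sd: "s ! (d ! (\<sigma> ! i)) = \<sigma> ! i" "s ! (d' ! (\<sigma>' ! i)) = \<sigma>' ! i"
      using rinv_nth elem.hyps(3,4) sb by auto
    have "iden D (fsimp F X) (\<sigma> ! i) (\<sigma>' ! i)"
      using D.iden_alpha[OF fX] sb sdc(2) elem.prems i' by (simp add: src_def)
    then have "iden D (simp_comp D (fsimp F X) s) (d ! (\<sigma> ! i)) (d' ! (\<sigma>' ! i))"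
      using D.iden_sc[OF fX _ db] os sd by simp
    then show "iden D (fsimp F (tgt (X, simp_comp C X s, d))) (mapof (X, simp_comp C X s, d) ! (\<sigma> ! i))
        (mapof (X, simp_comp C X s, d') ! (\<sigma>' ! i))"
      using fe by (simp add: tgt_def mapof_def)
  qed (simp_all add: src_def tgt_def)
next
  case (refl m)
  have X: "is_simplex C (src m)" and Y: "is_simplex C (tgt m)" and o\<xi>: "ord_map (mapof m) (dim (src m)) (dim (tgt m))"
    and sc: "simp_comp C (tgt m) (mapof m) = src m" using refl.hyps by (auto simp: is_dmor_def)
  have fX: "is_simplex D (fsimp F (src m))" and fY: "is_simplex D (fsimp F (tgt m))" using fs_sim X Y by auto
  have fe: "fsimp F (src m) = simp_comp D (fsimp F (tgt m)) (mapof m)" using fs_sc[OF Y o\<xi>] sc by simp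
  show ?case
  proof (rule Sd_eq[OF refl.hyps refl.hyps HOL.refl HOL.refl refl.prems(1)])
    show "sd_choice D F (src m) \<sigma>'" by fact
    fix i assume i: "i \<le> dim (rr D (fsimp F (src m)))"
    have sb: "\<sigma> ! i \<le> dim (src m)" "\<sigma>' ! i \<le> dim (src m)" using sdc(3) refl.prems i by auto
    have "iden D (fsimp F (src m)) (\<sigma> ! i) (\<sigma>' ! i)"
      using D.iden_alpha[OF fX] sb sdc(2) refl.prems i by simp
    then show "iden D (fsimp F (tgt m)) (mapof m ! (\<sigma> ! i)) (mapof m ! (\<sigma>' ! i))"
      using D.iden_sc[OF fY _ sb] o\<xi> fe by simp
  qed
next
  case (sym m m')
  then show ?case using dsim.sym by blast
next
  case (trans m m' m'')
  obtain \<sigma>'' where s: "sd_choice D F (src m') \<sigma>''" using sd_ex by blast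
  show ?case using trans.IH(1)[OF trans.prems(1) s] trans.IH(2)[OF s trans.prems(2)] dsim.trans by blast
next
  case (post m m' n)
  have p: "is_dmor C m" "is_dmor C m'" "src m = src m'" "tgt m = tgt m'" using C.dsim_props[OF post.hyps(1)] by auto
  obtain \<tau> where t: "sd_choice D F (src n) \<tau>" using sd_ex by blast
  have s1: "sd_choice D F (src m) \<sigma>" and s2: "sd_choice D F (src m') \<sigma>'"
    using post.prems by (simp_all add: dcomp_def src_def)
  have A: "dsim D (Sd_mor D F (dcomp n m) \<sigma>) (dcomp (Sd_mor D F n \<tau>) (Sd_mor D F m \<sigma>))"
    using Sd_comp[OF p(1) post.hyps(2) post.hyps(3) s1 t s1] .
  have B: "dsim D (Sd_mor D F m \<sigma>) (Sd_mor D F m' \<sigma>')" using post.IH s1 s2 by blast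
  have Cc: "dsim D (dcomp (Sd_mor D F n \<tau>) (Sd_mor D F m \<sigma>)) (dcomp (Sd_mor D F n \<tau>) (Sd_mor D F m' \<sigma>'))"
    using dsim.post[OF B Sd_dmor[OF post.hyps(2) t]] post.hyps(3) by (simp add: Sd_mor_eq src_def tgt_def)
  have Dd: "dsim D (Sd_mor D F (dcomp n m') \<sigma>') (dcomp (Sd_mor D F n \<tau>) (Sd_mor D F m' \<sigma>'))"
    using Sd_comp[OF p(2) post.hyps(2) _ s2 t s2] post.hyps(3) p(4) by simp
  show ?case using dsim.trans[OF A dsim.trans[OF Cc dsim.sym[OF Dd]]] .
next
  case (pre m m' n)
  have p: "is_dmor C m" "is_dmor C m'" "src m = src m'" "tgt m = tgt m'" using C.dsim_props[OF pre.hyps(1)] by auto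
  obtain \<tau> where t: "sd_choice D F (src m) \<tau>" using sd_ex by blast
  have s1: "sd_choice D F (src n) \<sigma>" and s2: "sd_choice D F (src n) \<sigma>'"
    using pre.prems by (simp_all add: dcomp_def src_def)
  have A: "dsim D (Sd_mor D F (dcomp m n) \<sigma>) (dcomp (Sd_mor D F m \<tau>) (Sd_mor D F n \<sigma>))"
    using Sd_comp[OF pre.hyps(2) p(1) _ s1 t s1] pre.hyps(3) by simp
  have B: "dsim D (Sd_mor D F m \<tau>) (Sd_mor D F m' \<tau>)" using pre.IH t p(3) by simp
  have Cc: "dsim D (dcomp (Sd_mor D F m \<tau>) (Sd_mor D F n \<sigma>)) (dcomp (Sd_mor D F m' \<tau>) (Sd_mor D F n \<sigma>))"
    using dsim.pre[OF B Sd_dmor[OF pre.hyps(2) s1]] pre.hyps(3) by (simp add: Sd_mor_eq src_def tgt_def)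
  have Dd: "dsim D (Sd_mor D F (dcomp m' n) \<sigma>') (dcomp (Sd_mor D F m' \<tau>) (Sd_mor D F n \<sigma>))"
    using Sd_comp[OF pre.hyps(2) p(2) _ s1 _ s2] pre.hyps(3) p(3) t by simp
  show ?case using dsim.trans[OF A dsim.trans[OF Cc dsim.sym[OF Dd]]] .
qed

lemma Sd_id: assumes X: "is_simplex C X" and s: "sd_choice D F X \<sigma>"
  shows "dsim D (Sd_mor D F (did X) \<sigma>) (did (Sd_obj D F X))"
proof -
  have o\<sigma>: "ord_map \<sigma> (dim (rr D (fsimp F X))) (dim X)" and a: "map_comp (alpha D (fsimp F X)) \<sigma> = [0..<Suc (dim (rr D (fsimp F X)))]"
    using s unfolding sd_choice_def Sd_obj_def is_rinv_def by auto
  have "Sd_mor D F (did X) \<sigma> = did (Sd_obj D F X)"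
    using mc_id_left[OF o\<sigma>] a by (simp add: Sd_mor_def did_def src_def tgt_def mapof_def Sd_obj_def del: upt_Suc)
  then show ?thesis using dsim.refl[OF D.did_dmor[OF D.rr_sim[OF fs_sim[OF X]]]] by (simp add: Sd_obj_def)
qed

end

theorem lemma23:
  fixes C :: "('o1, 'a1) cat" and D :: "('o2, 'a2) cat" and E :: "('o3, 'a3) cat"
    and F :: "('o1, 'a1, 'o2, 'a2) ftor" and G :: "('o2, 'a2, 'o3, 'a3) ftor"
  assumes "is_cat C" and "is_cat D" and "is_cat E"
    and "is_functor C D F" and "is_functor D E G"
  shows
    \<comment> \<open>Sd(f) is well defined on objects\<close>
    "(\<forall>X. nondeg C X \<longrightarrow> nondeg D (Sd_obj D F X))
     \<comment> \<open>Sd(f) is well defined on morphisms: a morphism r(fX) -> r(fY), independent of the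
         representative and of the right inverse\<close>
   \<and> (\<forall>m m' \<sigma> \<sigma>'. is_sd_mor C m \<and> is_sd_mor C m' \<and> dsim C m m'
         \<and> sd_choice D F (src m) \<sigma> \<and> sd_choice D F (src m') \<sigma>' \<longrightarrow>
         is_sd_mor D (Sd_mor D F m \<sigma>) \<and> dsim D (Sd_mor D F m \<sigma>) (Sd_mor D F m' \<sigma>'))
     \<comment> \<open>Sd(f) preserves identities\<close>
   \<and> (\<forall>X \<sigma>. nondeg C X \<and> sd_choice D F X \<sigma> \<longrightarrow>
         dsim D (Sd_mor D F (did X) \<sigma>) (did (Sd_obj D F X)))
     \<comment> \<open>Sd(f) preserves composition\<close>
   \<and> (\<forall>m n \<sigma> \<tau> \<rho>. is_sd_mor C m \<and> is_sd_mor C n \<and> src n = tgt m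
         \<and> sd_choice D F (src m) \<sigma> \<and> sd_choice D F (src n) \<tau> \<and> sd_choice D F (src m) \<rho> \<longrightarrow>
         dsim D (Sd_mor D F (dcomp n m) \<rho>) (dcomp (Sd_mor D F n \<tau>) (Sd_mor D F m \<sigma>)))
     \<comment> \<open>Sd(id_C) = id_{Sd(C)}\<close>
   \<and> (\<forall>X. nondeg C X \<longrightarrow> Sd_obj C id_functor X = X)
   \<and> (\<forall>m \<sigma>. is_sd_mor C m \<and> sd_choice C id_functor (src m) \<sigma> \<longrightarrow>
         dsim C (Sd_mor C id_functor m \<sigma>) m)
     \<comment> \<open>Sd(g o f) = Sd(g) o Sd(f)\<close>
   \<and> (\<forall>X. nondeg C X \<longrightarrow> Sd_obj E (functor_comp G F) X = Sd_obj E G (Sd_obj D F X))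
   \<and> (\<forall>m \<sigma> \<sigma>1 \<sigma>2. is_sd_mor C m \<and> sd_choice E (functor_comp G F) (src m) \<sigma>
         \<and> sd_choice D F (src m) \<sigma>1 \<and> sd_choice E G (Sd_obj D F (src m)) \<sigma>2 \<longrightarrow>
         dsim E (Sd_mor E (functor_comp G F) m \<sigma>)
                (Sd_mor E G (Sd_mor D F m \<sigma>1) \<sigma>2))"
proof -
  interpret FF: cfun C D F using assms by (simp add: cfun_def ccat_def cfun_axioms_def)
  interpret GG: cfun D E G using assms by (simp add: cfun_def ccat_def cfun_axioms_def)
  interpret GF: cfun C E "functor_comp G F" using assms functor_comp_is
    by (simp add: cfun_def ccat_def cfun_axioms_def)
  have GI: "\<And>a. is_identity D a \<Longrightarrow> is_identity E (FA G a)" using GG.F_identity by blast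
  have P1: "\<forall>X. nondeg C X \<longrightarrow> nondeg D (Sd_obj D F X)"
  proof (intro allI impI)
    fix X assume "nondeg C X"
    then have "is_simplex C X" by (simp add: nondeg_def)
    then show "nondeg D (Sd_obj D F X)" using FF.D.rr_nondeg[OF FF.fs_sim] by (simp add: Sd_obj_def)
  qed
  have P2: "\<forall>m m' \<sigma> \<sigma>'. is_sd_mor C m \<and> is_sd_mor C m' \<and> dsim C m m'
         \<and> sd_choice D F (src m) \<sigma> \<and> sd_choice D F (src m') \<sigma>' \<longrightarrow>
         is_sd_mor D (Sd_mor D F m \<sigma>) \<and> dsim D (Sd_mor D F m \<sigma>) (Sd_mor D F m' \<sigma>')"
  proof (intro allI impI, elim conjE, intro conjI)
    fix m m' \<sigma> \<sigma>'
    assume h: "is_sd_mor C m" "is_sd_mor C m'" "dsim C m m'" "sd_choice D F (src m) \<sigma>" "sd_choice D F (src m') \<sigma>'"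
    have dm: "is_dmor C m" using h(1) by (simp add: is_sd_mor_def)
    have "is_simplex C (src m)" "is_simplex C (tgt m)" using dm by (auto simp: is_dmor_def)
    then show "is_sd_mor D (Sd_mor D F m \<sigma>)"
      using FF.Sd_dmor[OF dm h(4)] FF.D.rr_nondeg FF.fs_sim
      by (simp add: is_sd_mor_def FF.Sd_mor_eq src_def tgt_def)
    show "dsim D (Sd_mor D F m \<sigma>) (Sd_mor D F m' \<sigma>')" using FF.Sd_wd[OF h(3) h(4) h(5)] .
  qed
  have P3: "\<forall>X \<sigma>. nondeg C X \<and> sd_choice D F X \<sigma> \<longrightarrow>
         dsim D (Sd_mor D F (did X) \<sigma>) (did (Sd_obj D F X))"
    using FF.Sd_id by (auto simp: nondeg_def)
  have P4: "\<forall>m n \<sigma> \<tau> \<rho>. is_sd_mor C m \<and> is_sd_mor C n \<and> src n = tgt m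
         \<and> sd_choice D F (src m) \<sigma> \<and> sd_choice D F (src n) \<tau> \<and> sd_choice D F (src m) \<rho> \<longrightarrow>
         dsim D (Sd_mor D F (dcomp n m) \<rho>) (dcomp (Sd_mor D F n \<tau>) (Sd_mor D F m \<sigma>))"
    using FF.Sd_comp by (auto simp: is_sd_mor_def)
  have P5: "\<forall>X. nondeg C X \<longrightarrow> Sd_obj C id_functor X = X"
    using FF.C.nondeg_rr by (simp add: Sd_obj_def fsimp_id)
  have P6: "\<forall>m \<sigma>. is_sd_mor C m \<and> sd_choice C id_functor (src m) \<sigma> \<longrightarrow>
         dsim C (Sd_mor C id_functor m \<sigma>) m"
  proof (intro allI impI, elim conjE)
    fix m \<sigma> assume h: "is_sd_mor C m" "sd_choice C id_functor (src m) \<sigma>"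
    have dm: "is_dmor C m" and nX: "nondeg C (src m)" and nY: "nondeg C (tgt m)" using h(1) by (auto simp: is_sd_mor_def)
    have o\<xi>: "ord_map (mapof m) (dim (src m)) (dim (tgt m))" using dm by (simp add: is_dmor_def)
    have rX: "rr C (src m) = src m" and rY: "rr C (tgt m) = tgt m" using FF.C.nondeg_rr nX nY by auto
    have aX: "alpha C (src m) = [0..<Suc (dim (src m))]" and aY: "alpha C (tgt m) = [0..<Suc (dim (tgt m))]"
      using FF.C.nondeg_alpha nX nY by auto
    have o\<sigma>: "ord_map \<sigma> (dim (src m)) (dim (src m))" and a\<sigma>: "map_comp [0..<Suc (dim (src m))] \<sigma> = [0..<Suc (dim (src m))]"
      using h(2) rX aX unfolding sd_choice_def Sd_obj_def is_rinv_def by (auto simp: fsimp_id)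
    have s: "\<sigma> = [0..<Suc (dim (src m))]" using mc_id_left[OF o\<sigma>] a\<sigma> by simp
    have "Sd_mor C id_functor m \<sigma> = m"
      using rX rY aY s mc_id_right[OF om_len[OF o\<xi>]] mc_id_left[OF o\<xi>]
      by (simp add: Sd_mor_def Sd_obj_def fsimp_id src_def tgt_def mapof_def del: upt_Suc)
    then show "dsim C (Sd_mor C id_functor m \<sigma>) m" using dsim.refl[OF dm] by simp
  qed
  have P7: "\<forall>X. nondeg C X \<longrightarrow> Sd_obj E (functor_comp G F) X = Sd_obj E G (Sd_obj D F X)"
    using rr_GrF[OF GI] by (simp add: Sd_obj_def fsimp_comp)
  have P8: "\<forall>m \<sigma> \<sigma>1 \<sigma>2. is_sd_mor C m \<and> sd_choice E (functor_comp G F) (src m) \<sigma>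
         \<and> sd_choice D F (src m) \<sigma>1 \<and> sd_choice E G (Sd_obj D F (src m)) \<sigma>2 \<longrightarrow>
         dsim E (Sd_mor E (functor_comp G F) m \<sigma>)
                (Sd_mor E G (Sd_mor D F m \<sigma>1) \<sigma>2)"
  proof (intro allI impI, elim conjE)
    fix m \<sigma> \<sigma>1 \<sigma>2
    assume h: "is_sd_mor C m" "sd_choice E (functor_comp G F) (src m) \<sigma>" "sd_choice D F (src m) \<sigma>1"
      "sd_choice E G (Sd_obj D F (src m)) \<sigma>2"
    have dm: "is_dmor C m" using h(1) by (simp add: is_sd_mor_def)
    have h4: "sd_choice E G (rr D (fsimp F (src m))) \<sigma>2" using h(4) by (simp add: Sd_obj_def)
    have X: "is_simplex C (src m)" and Y: "is_simplex C (tgt m)" and o\<xi>: "ord_map (mapof m) (dim (src m)) (dim (tgt m))"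
      and sc: "simp_comp C (tgt m) (mapof m) = src m" using dm by (auto simp: is_dmor_def)
    let ?gfX = "fsimp (functor_comp G F) (src m)" and ?gfY = "fsimp (functor_comp G F) (tgt m)"
    have gX: "is_simplex E ?gfX" and gY: "is_simplex E ?gfY" using GF.fs_sim X Y by auto
    have ge: "?gfX = simp_comp E ?gfY (mapof m)" using GF.fs_sc[OF Y o\<xi>] sc by simp
    have d1: "is_dmor D (Sd_mor D F m \<sigma>1)" using FF.Sd_dmor[OF dm h(3)] .
    have s2: "sd_choice E G (src (Sd_mor D F m \<sigma>1)) \<sigma>2" using h(4) by (simp add: FF.Sd_mor_eq src_def Sd_obj_def)
    let ?T = "rr E ?gfX" and ?W = "rr E ?gfY"
    have e1: "Sd_mor E (functor_comp G F) m \<sigma> = (?T, ?W, mapof (Sd_mor E (functor_comp G F) m \<sigma>))"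
      by (simp add: GF.Sd_mor_eq mapof_def)
    have e2: "Sd_mor E G (Sd_mor D F m \<sigma>1) \<sigma>2 = (?T, ?W, mapof (Sd_mor E G (Sd_mor D F m \<sigma>1) \<sigma>2))"
      by (simp add: GG.Sd_mor_eq FF.Sd_mor_eq mapof_def src_def tgt_def rr_GrF[OF GI] fsimp_comp)
    show "dsim E (Sd_mor E (functor_comp G F) m \<sigma>) (Sd_mor E G (Sd_mor D F m \<sigma>1) \<sigma>2)"
    proof (subst e1, subst e2, rule GG.D.key)
      show "is_dmor E (?T, ?W, mapof (Sd_mor E (functor_comp G F) m \<sigma>))" using GF.Sd_dmor[OF dm h(2)] e1 by simp
      show "is_dmor E (?T, ?W, mapof (Sd_mor E G (Sd_mor D F m \<sigma>1) \<sigma>2))" using GG.Sd_dmor[OF d1 s2] e2 by simp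
      fix i assume i: "i \<le> dim ?T"
      have i2: "i \<le> dim (rr E (fsimp G (src (Sd_mor D F m \<sigma>1))))"
        using i by (simp add: FF.Sd_mor_eq src_def rr_GrF[OF GI] fsimp_comp)
      have i2': "i \<le> dim (rr E (fsimp G (rr D (fsimp F (src m)))))"
        using i2 by (simp add: FF.Sd_mor_eq src_def)
      have sb: "\<sigma> ! i \<le> dim (src m)" using GF.sdc(3)[OF h(2) i] .
      have s2b: "\<sigma>2 ! i \<le> dim (rr D (fsimp F (src m)))" using GG.sdc(3)[OF h4 i2'] by simp
      have s1b: "\<sigma>1 ! (\<sigma>2 ! i) \<le> dim (src m)" using FF.sdc(3)[OF h(3) s2b] .
      have ub: "mapof m ! (\<sigma> ! i) \<le> dim ?gfY" and vb: "mapof m ! (\<sigma>1 ! (\<sigma>2 ! i)) \<le> dim ?gfY"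
        using om_le[OF o\<xi>] sb s1b by auto
      have l: "mapof (Sd_mor E (functor_comp G F) m \<sigma>) ! i = alpha E ?gfY ! (mapof m ! (\<sigma> ! i))"
        using GF.Sd_nth[OF dm h(2) i] .
      have r: "mapof (Sd_mor E G (Sd_mor D F m \<sigma>1) \<sigma>2) ! i = alpha E ?gfY ! (mapof m ! (\<sigma>1 ! (\<sigma>2 ! i)))"
      proof -
        have "mapof (Sd_mor E G (Sd_mor D F m \<sigma>1) \<sigma>2) ! i
            = alpha E (fsimp G (rr D (fsimp F (tgt m)))) ! (mapof (Sd_mor D F m \<sigma>1) ! (\<sigma>2 ! i))"
          using GG.Sd_nth[OF d1 s2 i2] by (simp add: FF.Sd_mor_eq tgt_def)
        also have "\<dots> = alpha E (fsimp G (rr D (fsimp F (tgt m)))) ! (alpha D (fsimp F (tgt m)) ! (mapof m ! (\<sigma>1 ! (\<sigma>2 ! i))))"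
          using FF.Sd_nth[OF dm h(3) s2b] by simp
        also have "\<dots> = alpha E ?gfY ! (mapof m ! (\<sigma>1 ! (\<sigma>2 ! i)))"
          using alpha_GrF[OF GI, where j="mapof m ! (\<sigma>1 ! (\<sigma>2 ! i))" and V="fsimp F (tgt m)"] vb by (simp add: fsimp_comp)
        finally show ?thesis .
      qed
      have a1: "alpha E ?gfX ! (\<sigma> ! i) = i" using GF.sdc(2)[OF h(2) i] .
      have a2: "alpha E ?gfX ! (\<sigma>1 ! (\<sigma>2 ! i)) = i"
      proof -
        have "alpha E ?gfX ! (\<sigma>1 ! (\<sigma>2 ! i)) = alpha E (fsimp G (rr D (fsimp F (src m)))) ! (alpha D (fsimp F (src m)) ! (\<sigma>1 ! (\<sigma>2 ! i)))"
          using alpha_GrF[OF GI, where j="\<sigma>1 ! (\<sigma>2 ! i)" and V="fsimp F (src m)"] s1b by (simp add: fsimp_comp)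
        also have "\<dots> = alpha E (fsimp G (rr D (fsimp F (src m)))) ! (\<sigma>2 ! i)" using FF.sdc(2)[OF h(3) s2b] by simp
        also have "\<dots> = i" using GG.sdc(2)[OF h4 i2'] by simp
        finally show ?thesis .
      qed
      have "iden E ?gfX (\<sigma> ! i) (\<sigma>1 ! (\<sigma>2 ! i))"
        using GG.D.iden_alpha[OF gX] sb s1b a1 a2 by simp
      then have "iden E ?gfY (mapof m ! (\<sigma> ! i)) (mapof m ! (\<sigma>1 ! (\<sigma>2 ! i)))"
        using GG.D.iden_sc[OF gY o\<xi>[simplified GF.fs_dim[symmetric, of "tgt m"]] sb s1b] ge by simp
      then have "iden E ?W (alpha E ?gfY ! (mapof m ! (\<sigma> ! i))) (alpha E ?gfY ! (mapof m ! (\<sigma>1 ! (\<sigma>2 ! i))))"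
        using GG.D.iden_rr[OF gY ub vb] by simp
      then show "iden E ?W (mapof (Sd_mor E (functor_comp G F) m \<sigma>) ! i) (mapof (Sd_mor E G (Sd_mor D F m \<sigma>1) \<sigma>2) ! i)"
        using l r by simp
    qed
  qed
  show ?thesis using P1 P2 P3 P4 P5 P6 P7 P8 by blast
qed

end
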